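(* Let $f_1,\ldots,f_k:[a,b]\to\mathbb R$ be measurable. Let $\{\Lambda_n=\{\lambda_{1,n},\ldots,\lambda_{d_n,n}\}\}_n$ be a sequence of finite multisets of real numbers with $d_n\to\infty$ that has an asymptotic distribution described by $f=\mathrm{diag}(f_1,\ldots,f_k)$. Let $\{L_{n,1}\}_n,\ldots,\{L_{n,k}\}_n$ be sequences of natural numbers with $L_{n,1}+\cdots+L_{n,k}=d_n$ for every $n$ and $L_{n,j}/d_n\to1/k$ for every $j$. Then for every $n$ there exists a partition $\{\Lambda_{n,1},\ldots,\Lambda_{n,k}\}$ of $\Lambda_n$ such that, for every $j=1,\ldots,k$, $|\Lambda_{n,j}|=L_{n,j}$ and $\{\Lambda_{n,j}\}_n$ has an asymptotic distribution described by $f_j$.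
   Context: A sequence of finite multisets $\{\Lambda_n=\{\lambda_{1,n},\ldots,\lambda_{d_n,n}\}\}_n$ with $d_n\to\infty$ has an asymptotic distribution described by $\mathrm{diag}(f_1,\ldots,f_k)$ (with $f_j:[a,b]\to\mathbb R$ measurable) if $\lim_n\frac1{d_n}\sum_{i=1}^{d_n}F(\lambda_{i,n})=\frac1{b-a}\int_a^b\frac1k\sum_{j=1}^kF(f_j(x))\,dx$ for every continuous $F:\mathbb C\to\mathbb C$ with bounded support; for a scalar $g$ this is the case $k=1$, $f_1=g$. *)

theory Defs
  imports "HOL-Analysis.Analysis" "HOL-Library.Multiset"
begin

definition bounded_support :: "(complex \<Rightarrow> complex) \<Rightarrow> bool" where
  "bounded_support F \<longleftrightarrow> bounded {z. F z \<noteq> 0}"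

text \<open>The sequence of finite multisets Lam has an asymptotic distribution described by
  diag(fs 0, ..., fs (k-1)) on [a,b]: d_n = size (Lam n) tends to infinity and the
  averages of F over Lam n converge to the (normalised) integral.\<close>
definition asym_distr ::
  "(nat \<Rightarrow> real multiset) \<Rightarrow> real \<Rightarrow> real \<Rightarrow> (nat \<Rightarrow> real \<Rightarrow> real) \<Rightarrow> nat \<Rightarrow> bool" where
  "asym_distr Lam a b fs k \<longleftrightarrow>
     filterlim (\<lambda>n. size (Lam n)) at_top sequentially \<and>
     (\<forall>F :: complex \<Rightarrow> complex. continuous_on UNIV F \<and> bounded_support F \<longrightarrow>
        (\<lambda>n. (\<Sum>x\<in>#Lam n. F (complex_of_real x)) / of_nat (size (Lam n)))
        \<longlonglongrightarrow>
        of_real (1 / (b - a)) *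
          (LINT x:{a..b}|lborel. (1 / of_nat k) * (\<Sum>j<k. F (complex_of_real (fs j x)))))"

end

theory Submission
  imports Defs "HOL-Probability.Probability"
begin

locale greedy_setup =
  fixes k d :: nat and T :: "nat \<Rightarrow> nat \<Rightarrow> real" and L :: "nat \<Rightarrow> nat"
  assumes Tsum: "\<And>i. i \<le> d \<Longrightarrow> (\<Sum>j<k. T j i) = real i"
    and Tmono: "\<And>j i. j < k \<Longrightarrow> i < d \<Longrightarrow> T j i \<le> T j (Suc i)"
    and Tend: "\<And>j. j < k \<Longrightarrow> T j d = real (L j)"
    and T0: "\<And>j. j < k \<Longrightarrow> T j 0 = 0"
begin

definition ok :: "(nat \<Rightarrow> nat) \<Rightarrow> nat \<Rightarrow> nat \<Rightarrow> bool" where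
  "ok c i j \<longleftrightarrow> j < k \<and> c j < L j \<and>
     (\<forall>j'<k. c j' < L j' \<longrightarrow> T j' (Suc i) - real (c j') \<le> T j (Suc i) - real (c j))"

definition pick :: "(nat \<Rightarrow> nat) \<Rightarrow> nat \<Rightarrow> nat" where
  "pick c i = (SOME j. ok c i j)"

fun cnt :: "nat \<Rightarrow> nat \<Rightarrow> nat" where
  "cnt 0 = (\<lambda>_. 0)"
| "cnt (Suc i) = (let c = cnt i; j = pick c i in c(j := Suc (c j)))"

definition grp :: "nat \<Rightarrow> nat" where "grp i = pick (cnt i) i"

lemma cnt_Suc: "cnt (Suc i) j = cnt i j + (if grp i = j then 1 else 0)"
  unfolding cnt.simps Let_def grp_def by simp

declare cnt.simps(2)[simp del]

lemma cnt_card: "cnt m j = card {i. i < m \<and> grp i = j}"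
proof (induction m)
  case 0 then show ?case by simp
next
  case (Suc m)
  have "{i. i < Suc m \<and> grp i = j} = {i. i < m \<and> grp i = j} \<union> (if grp m = j then {m} else {})"
    by (auto simp: less_Suc_eq)
  then show ?case using Suc by (auto simp: cnt_Suc card_insert_if)
qed

lemma Tmono': "j < k \<Longrightarrow> i \<le> i' \<Longrightarrow> i' \<le> d \<Longrightarrow> T j i \<le> T j i'"
proof (induction i')
  case 0 then show ?case by simp
next
  case (Suc i')
  then show ?case using Tmono[of j i'] by (cases "i = Suc i'") (auto simp: le_Suc_eq)
qed

lemma ok_exists:
  assumes "\<forall>j<k. real (cnt i j) \<le> T j i + 1" "\<forall>j<k. cnt i j \<le> L j" "(\<Sum>j<k. cnt i j) = i" "i < d"
  shows "(\<exists>j. ok (cnt i) i j) \<and> (\<forall>j. ok (cnt i) i j \<longrightarrow> T j (Suc i) - real (cnt i j) > 0)"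
proof -
  let ?A = "{j. j < k \<and> cnt i j < L j}"
  let ?h = "\<lambda>j. T j (Suc i) - real (cnt i j)"
  have sumL: "(\<Sum>j<k. L j) = d"
  proof -
    have "real (\<Sum>j<k. L j) = (\<Sum>j<k. T j d)" using Tend by simp
    also have "\<dots> = real d" using Tsum by simp
    finally show ?thesis by linarith
  qed
  have "?A \<noteq> {}"
  proof
    assume "?A = {}"
    then have "\<forall>j<k. cnt i j = L j" using assms(2) by (metis (mono_tags, lifting) empty_Collect_eq le_neq_implies_less)
    then have "(\<Sum>j<k. cnt i j) = d" using sumL by simp
    then show False using assms by simp
  qed
  have finA: "finite ?A" by simp
  obtain j0 where j0: "j0 \<in> ?A" "\<And>j. j \<in> ?A \<Longrightarrow> ?h j \<le> ?h j0"
  proof -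
    have "Max (?h ` ?A) \<in> ?h ` ?A" using finA \<open>?A \<noteq> {}\<close> by (intro Max_in) auto
    then obtain j0 where "j0 \<in> ?A" "?h j0 = Max (?h ` ?A)" by (metis (no_types, lifting) imageE)
    moreover have "\<And>j. j \<in> ?A \<Longrightarrow> ?h j \<le> Max (?h ` ?A)" using finA by (intro Max_ge) auto
    ultimately show ?thesis using that by auto
  qed
  have nonA: "?h j \<le> 0" if "j < k" "j \<notin> ?A" for j
  proof -
    have "cnt i j = L j" using that assms(2) by auto
    have mono: "T j (Suc i) \<le> T j d" using Tmono' \<open>j<k\<close> assms(4) by simp
    then show ?thesis using \<open>cnt i j = L j\<close> Tend[OF \<open>j<k\<close>] by simp
  qed
  have s1: "(\<Sum>j<k. ?h j) = 1"
    using Tsum[of "Suc i"] assms(3,4) by (simp add: sum_subtractf flip: of_nat_sum)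
  have s2: "(\<Sum>j<k. ?h j) = (\<Sum>j\<in>?A. ?h j) + (\<Sum>j\<in>{..<k} - ?A. ?h j)"
    by (subst sum.subset_diff[of ?A "{..<k}"]) (auto simp: add.commute)
  have s3: "(\<Sum>j\<in>{..<k} - ?A. ?h j) \<le> 0"
    by (rule sum_nonpos) (use nonA in auto)
  have "(\<Sum>j\<in>?A. ?h j) \<ge> 1" using s1 s2 s3 by linarith
  moreover have "(\<Sum>j\<in>?A. ?h j) \<le> (\<Sum>j\<in>?A. ?h j0)"
    by (rule sum_mono) (use j0 in auto)
  ultimately have "card ?A * ?h j0 \<ge> 1" by simp
  then have "?h j0 > 0"
  proof -
    assume h: "card ?A * ?h j0 \<ge> 1"
    show ?thesis
    proof (rule ccontr)
      assume "\<not> ?h j0 > 0"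
      then have "card ?A * ?h j0 \<le> 0" by (simp add: mult_nonneg_nonpos)
      then show False using h by linarith
    qed
  qed
  moreover have "ok (cnt i) i j0" unfolding ok_def using j0 nonA by auto
  ultimately show ?thesis unfolding ok_def using j0 by force
qed

lemma invariant:
  "i \<le> d \<Longrightarrow> (\<forall>j<k. real (cnt i j) \<le> T j i + 1) \<and> (\<forall>j<k. cnt i j \<le> L j) \<and> (\<Sum>j<k. cnt i j) = i
     \<and> (\<forall>j. j \<ge> k \<longrightarrow> cnt i j = 0)"
proof (induction i)
  case 0 then show ?case using T0 by auto
next
  case (Suc i)
  then have IH: "\<forall>j<k. real (cnt i j) \<le> T j i + 1" "\<forall>j<k. cnt i j \<le> L j" "(\<Sum>j<k. cnt i j) = i"
       "\<forall>j. j \<ge> k \<longrightarrow> cnt i j = 0" and id: "i < d" by auto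
  have ex: "\<exists>j. ok (cnt i) i j" and pos: "\<And>j. ok (cnt i) i j \<Longrightarrow> T j (Suc i) - real (cnt i j) > 0"
    using ok_exists[OF IH(1-3) id] by blast+
  define j1 where "j1 = grp i"
  have okj: "ok (cnt i) i j1" unfolding j1_def grp_def pick_def using ex by (rule someI_ex)
  have c: "cnt (Suc i) j = cnt i j + (if j1 = j then 1 else 0)" for j unfolding j1_def by (rule cnt_Suc)
  have j1k: "j1 < k" and j1L: "cnt i j1 < L j1" using okj by (auto simp: ok_def)
  have A: "\<forall>j<k. real (cnt (Suc i) j) \<le> T j (Suc i) + 1"
  proof (intro allI impI)
    fix j assume "j < k"
    show "real (cnt (Suc i) j) \<le> T j (Suc i) + 1"
    proof (cases "j = j1")
      case True then show ?thesis using pos[OF okj] c[of j] by simp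
    next
      case False then show ?thesis using c[of j] IH(1) Tmono[OF \<open>j<k\<close> id] \<open>j<k\<close> by fastforce
    qed
  qed
  have B: "\<forall>j<k. cnt (Suc i) j \<le> L j" using IH(2) c j1L by (auto simp: Suc_le_eq)
  have C: "(\<Sum>j<k. cnt (Suc i) j) = Suc i"
  proof -
    have "(\<Sum>j<k. cnt (Suc i) j) = (\<Sum>j<k. cnt i j) + (\<Sum>j<k. if j1 = j then 1 else 0)"
      by (simp add: c sum.distrib)
    also have "(\<Sum>j<k. if j1 = j then 1 else (0::nat)) = 1" using j1k by (simp add: sum.delta)
    finally show ?thesis using IH(3) by simp
  qed
  have D: "\<forall>j. j \<ge> k \<longrightarrow> cnt (Suc i) j = 0" using IH(4) c j1k by auto
  show ?case using A B C D by blast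
qed

lemma grp_lt: "i < d \<Longrightarrow> grp i < k"
  using invariant[of "Suc i"] cnt_Suc[of i "grp i"] by (metis Suc_leI add_is_0 not_le one_neq_zero)

lemma cnt_end: "j < k \<Longrightarrow> cnt d j = L j"
proof -
  assume "j < k"
  have le: "\<forall>j<k. cnt d j \<le> L j" and s: "(\<Sum>j<k. cnt d j) = d" using invariant[of d] by auto
  have sumL: "real (\<Sum>j<k. L j) = real d"
    using Tend Tsum[of d] by (simp add: of_nat_sum)
  have "(\<Sum>j<k. L j - cnt d j) = (\<Sum>j<k. L j) - (\<Sum>j<k. cnt d j)"
    using le by (intro sum_subtractf_nat) auto
  also have "\<dots> = 0" using s sumL by linarith
  finally have "\<forall>j\<in>{..<k}. L j - cnt d j = 0" by simp
  then show ?thesis using le \<open>j<k\<close> by (meson diff_is_0_eq le_antisym lessThan_iff)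
qed

lemma cnt_bound:
  assumes "j < k" "m \<le> d"
  shows "\<bar>real (cnt m j) - T j m\<bar> \<le> real k"
proof -
  have I: "\<forall>j<k. real (cnt m j) \<le> T j m + 1" "(\<Sum>j<k. cnt m j) = m"
    using invariant[OF assms(2)] by auto
  have "real m = (\<Sum>j'<k. real (cnt m j'))" using I(2) by (simp flip: of_nat_sum)
  also have "\<dots> = real (cnt m j) + (\<Sum>j'\<in>{..<k} - {j}. real (cnt m j'))"
    using assms(1) by (subst sum.remove[of _ j]) auto
  also have "(\<Sum>j'\<in>{..<k} - {j}. real (cnt m j')) \<le> (\<Sum>j'\<in>{..<k} - {j}. T j' m + 1)"
    using I(1) by (intro sum_mono) auto
  also have "(\<Sum>j'\<in>{..<k} - {j}. T j' m + 1) = (\<Sum>j'\<in>{..<k} - {j}. T j' m) + real (k - 1)"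
    using assms(1) by (simp add: sum.distrib)
  also have "(\<Sum>j'\<in>{..<k} - {j}. T j' m) = real m - T j m"
    using Tsum[OF assms(2)] assms(1) sum.remove[of "{..<k}" j "\<lambda>j'. T j' m"] by auto
  finally have "real m \<le> real (cnt m j) + (real m - T j m + real (k - 1))" by simp
  moreover have "real (cnt m j) \<le> T j m + 1" using I(1) assms(1) by auto
  moreover have "real (k - 1) \<le> real k" by simp
  moreover have "1 \<le> real k" using assms(1) by simp
  ultimately show ?thesis by linarith
qed

end

lemma greedy_partition:
  fixes k d :: nat and T :: "nat \<Rightarrow> nat \<Rightarrow> real" and L :: "nat \<Rightarrow> nat"
  assumes "\<And>i. i \<le> d \<Longrightarrow> (\<Sum>j<k. T j i) = real i"
    and "\<And>j i. j < k \<Longrightarrow> i < d \<Longrightarrow> T j i \<le> T j (Suc i)"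
    and "\<And>j. j < k \<Longrightarrow> T j d = real (L j)"
    and "\<And>j. j < k \<Longrightarrow> T j 0 = 0"
  shows "\<exists>g :: nat \<Rightarrow> nat. (\<forall>i<d. g i < k) \<and> (\<forall>j<k. card {i. i < d \<and> g i = j} = L j) \<and>
     (\<forall>j<k. \<forall>m\<le>d. \<bar>real (card {i. i < m \<and> g i = j}) - T j m\<bar> \<le> real k)"
proof -
  interpret greedy_setup k d T L by standard (use assms in auto)
  show ?thesis
    by (rule exI[of _ grp]) (auto simp: grp_lt cnt_end cnt_bound simp flip: cnt_card)
qed


lemma down_closed_eq:
  fixes S :: "nat set"
  assumes "S \<subseteq> {..<n}" "\<And>i i'. i' \<in> S \<Longrightarrow> i < i' \<Longrightarrow> i \<in> S"
  shows "S = {..<card S}"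
proof (cases "S = {}")
  case True then show ?thesis by simp
next
  case False
  have fin: "finite S" using assms(1) finite_subset by blast
  define m where "m = Max S"
  have mS: "m \<in> S" using fin False by (simp add: m_def)
  have "S = {..m}"
  proof
    show "S \<subseteq> {..m}" using fin by (auto simp: m_def)
    show "{..m} \<subseteq> S" using mS assms(2) by (auto simp: le_less)
  qed
  then show ?thesis by auto
qed

lemma sorted_prefix_set:
  fixes xs :: "real list"
  assumes "sorted xs"
  shows "{i. i < length xs \<and> xs ! i \<le> x} = {..<length (filter (\<lambda>v. v \<le> x) xs)}"
proof -
  let ?S = "{i. i < length xs \<and> xs ! i \<le> x}"
  have "?S = {..<card ?S}"
  proof (rule down_closed_eq[of _ "length xs"])
    show "?S \<subseteq> {..<length xs}" by auto
    fix i i' assume "i' \<in> ?S" "i < i'"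
    then have "i' < length xs" "xs ! i' \<le> x" by auto
    moreover have "xs ! i \<le> xs ! i'" using assms \<open>i < i'\<close> \<open>i' < length xs\<close> by (simp add: sorted_iff_nth_mono)
    ultimately show "i \<in> ?S" using \<open>i < i'\<close> by auto
  qed
  also have "card ?S = length (filter (\<lambda>v. v \<le> x) xs)"
    by (simp add: length_filter_conv_card)
  finally show ?thesis .
qed

lemma length_filter_upt: "length (filter P [0..<n]) = card {i. i < n \<and> P i}"
  unfolding length_filter_conv_card by (rule arg_cong[where f=card]) auto

lemma sorted_part_count:
  fixes xs :: "real list"
  assumes "sorted xs"
  shows "length (filter (\<lambda>v. v \<le> x) (map (nth xs) (filter (\<lambda>i. g i = j) [0..<length xs])))
       = card {i. i < length (filter (\<lambda>v. v \<le> x) xs) \<and> g i = j}"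
proof -
  have "length (filter (\<lambda>v. v \<le> x) (map (nth xs) (filter (\<lambda>i. g i = j) [0..<length xs])))
      = length (filter (\<lambda>i. g i = j \<and> xs ! i \<le> x) [0..<length xs])"
    by (simp add: filter_map o_def conj_commute filter_filter)
  also have "\<dots> = card {i. i < length xs \<and> g i = j \<and> xs ! i \<le> x}"
    by (simp add: length_filter_upt)
  also have "{i. i < length xs \<and> g i = j \<and> xs ! i \<le> x} = {i. i \<in> {i. i < length xs \<and> xs ! i \<le> x} \<and> g i = j}"
    by auto
  also have "\<dots> = {i. i < length (filter (\<lambda>v. v \<le> x) xs) \<and> g i = j}"
    unfolding sorted_prefix_set[OF assms] by auto
  finally show ?thesis .
qed

lemma part_sum_mset:
  assumes "\<And>i. i \<in> set ls \<Longrightarrow> g i < (k::nat)"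
  shows "(\<Sum>j<k. mset (filter (\<lambda>i. g i = j) ls)) = mset ls"
  using assms
proof (induction ls)
  case Nil then show ?case by simp
next
  case (Cons a ls)
  have "(\<Sum>j<k. mset (filter (\<lambda>i. g i = j) (a # ls)))
      = (\<Sum>j<k. (if g a = j then {#a#} else {#}) + mset (filter (\<lambda>i. g i = j) ls))"
    by (intro sum.cong) auto
  also have "\<dots> = (\<Sum>j<k. (if g a = j then {#a#} else {#})) + (\<Sum>j<k. mset (filter (\<lambda>i. g i = j) ls))"
    by (simp add: sum.distrib)
  also have "(\<Sum>j<k. (if g a = j then {#a#} else {#})) = {#a#}"
    using Cons.prems[of a] by (simp add: sum.delta)
  finally show ?case using Cons by simp
qed

lemma image_mset_sum_lt: "image_mset h (\<Sum>j<(k::nat). A j) = (\<Sum>j<k. image_mset h (A j))"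
  by (induction k) auto

lemma part_sum_map:
  assumes "\<And>i. i < length xs \<Longrightarrow> g i < (k::nat)"
  shows "(\<Sum>j<k. mset (map (nth xs) (filter (\<lambda>i. g i = j) [0..<length xs]))) = mset xs"
proof -
  have "(\<Sum>j<k. mset (map (nth xs) (filter (\<lambda>i. g i = j) [0..<length xs])))
      = image_mset (nth xs) (\<Sum>j<k. mset (filter (\<lambda>i. g i = j) [0..<length xs]))"
    by (simp add: image_mset_sum_lt)
  also have "\<dots> = image_mset (nth xs) (mset [0..<length xs])"
    using assms by (subst part_sum_mset[of "[0..<length xs]" g k]) auto
  also have "\<dots> = mset xs" by (metis map_nth mset_map)
  finally show ?thesis .
qed


locale mix =
  fixes k :: nat and M :: "nat \<Rightarrow> real measure"
  assumes kpos: "k > 0" and RD: "\<And>j. j < k \<Longrightarrow> real_distribution (M j)"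
begin

definition G :: "real \<Rightarrow> real" where "G x = (\<Sum>j<k. cdf (M j) x) / k"
definition mlt :: "real \<Rightarrow> real" where "mlt y = (\<Sum>j<k. measure (M j) {..<y}) / k"
definition mat :: "real \<Rightarrow> real" where "mat y = (\<Sum>j<k. measure (M j) {y}) / k"
definition Q :: "real \<Rightarrow> real" where "Q t = Inf {x. t \<le> G x}"
definition c :: "nat \<Rightarrow> real \<Rightarrow> real" where
  "c j t = (if t \<le> 0 then 0 else if 1 \<le> t then 1 / k else
      measure (M j) {..<Q t} / k + (t - mlt (Q t)) / mat (Q t) * (measure (M j) {Q t} / k))"

lemma FBM: "j < k \<Longrightarrow> finite_borel_measure (M j)"
  using RD real_distribution.finite_borel_measure_M by blast

lemma G_rcm: "right_continuous_mono G 0 1"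
proof
  fix x
  show "continuous (at_right x) G" unfolding G_def
    by (intro continuous_divide continuous_sum continuous_const)
       (use kpos in \<open>auto intro: finite_borel_measure.cdf_is_right_cont[OF FBM]\<close>)
next
  show "mono G" unfolding G_def
    by (intro monoI divide_right_mono sum_mono) (auto intro: finite_borel_measure.cdf_nondecreasing[OF FBM])
next
  have "((\<lambda>x. (\<Sum>j<k. cdf (M j) x) / k) \<longlongrightarrow> (\<Sum>j<k. 0) / k) at_bot"
    by (intro tendsto_divide tendsto_sum tendsto_const) (use kpos in \<open>auto intro: finite_borel_measure.cdf_lim_at_bot[OF FBM]\<close>)
  then show "(G \<longlongrightarrow> 0) at_bot" by (simp add: G_def[abs_def])
next
  have "((\<lambda>x. (\<Sum>j<k. cdf (M j) x) / k) \<longlongrightarrow> (\<Sum>j<k. 1) / k) at_top"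
    by (intro tendsto_divide tendsto_sum tendsto_const) (use kpos in \<open>auto intro: real_distribution.cdf_lim_at_top_prob[OF RD]\<close>)
  then show "(G \<longlongrightarrow> 1) at_top" using kpos by (simp add: G_def[abs_def])
qed

lemma pseudo: "0 < t \<Longrightarrow> t < 1 \<Longrightarrow> t \<le> G x \<longleftrightarrow> Q t \<le> x"
  using right_continuous_mono.pseudoinverse[OF G_rcm] unfolding Q_def by blast

lemma meas_split: "j < k \<Longrightarrow> cdf (M j) y = measure (M j) {..<y} + measure (M j) {y}"
proof -
  assume "j < k"
  interpret real_distribution "M j" by (rule RD) fact
  have "{..y} = {..<y} \<union> {y}" by auto
  moreover have "measure (M j) ({..<y} \<union> {y}) = measure (M j) {..<y} + measure (M j) {y}"
    by (rule finite_measure_Union) auto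
  ultimately show ?thesis by (simp add: cdf_def)
qed

lemma G_split: "G y = mlt y + mat y"
  unfolding G_def mlt_def mat_def by (simp add: meas_split sum.distrib add_divide_distrib)

lemma mlt_le: "0 < t \<Longrightarrow> t < 1 \<Longrightarrow> mlt (Q t) \<le> t"
proof -
  assume t: "0 < t" "t < 1"
  let ?y = "Q t"
  have lim: "(G \<longlongrightarrow> mlt ?y) (at_left ?y)" unfolding G_def mlt_def
    by (intro tendsto_divide tendsto_sum tendsto_const) (use kpos in \<open>auto intro: finite_borel_measure.cdf_at_left[OF FBM]\<close>)
  have ev: "eventually (\<lambda>x. G x \<le> t) (at_left ?y)"
    unfolding eventually_at_left_field
  proof (rule exI[of _ "?y - 1"], intro conjI allI impI)
    fix y assume "?y - 1 < y" "y < ?y"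
    then have "\<not> t \<le> G y" using pseudo[OF t, of y] by auto
    then show "G y \<le> t" by simp
  qed simp
  show "mlt ?y \<le> t" using tendsto_upperbound[OF lim ev] by simp
qed

lemma G_ge: "0 < t \<Longrightarrow> t < 1 \<Longrightarrow> t \<le> G (Q t)"
  using pseudo by auto

lemma nonneg_lt: "j < k \<Longrightarrow> 0 \<le> measure (M j) A" by simp

lemma theta: assumes "0 < t" "t < 1"
  shows "0 \<le> (t - mlt (Q t)) / mat (Q t)" "(t - mlt (Q t)) / mat (Q t) \<le> 1"
proof -
  have "mat (Q t) \<ge> 0" unfolding mat_def by (simp add: sum_nonneg)
  moreover have "mlt (Q t) \<le> t" using mlt_le assms by auto
  moreover have "t \<le> mlt (Q t) + mat (Q t)" using G_ge[OF assms] G_split by simp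
  ultimately show "0 \<le> (t - mlt (Q t)) / mat (Q t)" "(t - mlt (Q t)) / mat (Q t) \<le> 1"
    by (auto simp: divide_le_eq_1)
qed

lemma c_sum: "0 \<le> t \<Longrightarrow> t \<le> 1 \<Longrightarrow> (\<Sum>j<k. c j t) = t"
proof -
  assume t: "0 \<le> t" "t \<le> 1"
  consider "t = 0" | "t = 1" | "0 < t \<and> t < 1" using t by linarith
  then show ?thesis
  proof cases
    case 1 then show ?thesis by (simp add: c_def)
  next
    case 2 then show ?thesis using kpos by (simp add: c_def)
  next
    case 3
    let ?y = "Q t"
    have "(\<Sum>j<k. c j t) = (\<Sum>j<k. measure (M j) {..<?y}) / k + (t - mlt ?y) / mat ?y * ((\<Sum>j<k. measure (M j) {?y}) / k)"
      using 3 by (simp add: c_def sum.distrib sum_divide_distrib sum_distrib_left)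
    also have "\<dots> = mlt ?y + (t - mlt ?y) / mat ?y * mat ?y" by (simp add: mlt_def mat_def)
    also have "\<dots> = t"
    proof (cases "mat ?y = 0")
      case True
      then show ?thesis using mlt_le[of t] G_ge[of t] G_split[of ?y] 3 by simp
    next
      case False then show ?thesis by simp
    qed
    finally show ?thesis .
  qed
qed

lemma c_mid_bounds:
  assumes "j < k" "0 < t" "t < 1"
  shows "measure (M j) {..<Q t} / k \<le> c j t" "c j t \<le> cdf (M j) (Q t) / k"
proof -
  have th: "0 \<le> (t - mlt (Q t)) / mat (Q t)" "(t - mlt (Q t)) / mat (Q t) \<le> 1"
    using theta[OF assms(2,3)] by auto
  have m0: "0 \<le> measure (M j) {Q t} / k" by simp
  have "(t - mlt (Q t)) / mat (Q t) * (measure (M j) {Q t} / k) \<le> 1 * (measure (M j) {Q t} / k)"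
    by (rule mult_right_mono[OF th(2) m0])
  moreover have "0 \<le> (t - mlt (Q t)) / mat (Q t) * (measure (M j) {Q t} / k)"
    by (rule mult_nonneg_nonneg[OF th(1) m0])
  ultimately show "measure (M j) {..<Q t} / k \<le> c j t" "c j t \<le> cdf (M j) (Q t) / k"
    using assms by (auto simp: c_def meas_split add_divide_distrib)
qed

lemma cdf_le1: "j < k \<Longrightarrow> cdf (M j) x \<le> 1"
  using RD real_distribution.cdf_bounded_prob by blast

lemma c_nonneg: "j < k \<Longrightarrow> 0 \<le> c j t"
  using c_mid_bounds[of j t] by (cases "t \<le> 0 \<or> 1 \<le> t") (auto simp: c_def intro: order_trans[rotated])

lemma c_le: "j < k \<Longrightarrow> c j t \<le> 1 / k"
proof (cases "t \<le> 0 \<or> 1 \<le> t")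
  case True then show ?thesis by (auto simp: c_def)
next
  case False
  assume "j < k"
  then have "c j t \<le> cdf (M j) (Q t) / k" using c_mid_bounds[of j t] False by auto
  also have "\<dots> \<le> 1 / k" using cdf_le1[OF \<open>j<k\<close>] by (simp add: divide_right_mono)
  finally show ?thesis .
qed

lemma c_mono_mid:
  assumes "j < k" "0 < s" "s \<le> t" "t < 1"
  shows "c j s \<le> c j t"
proof -
  have "Q s \<le> Q t" using right_continuous_mono.mono_I[OF G_rcm] assms unfolding Q_def mono_on_def by auto
  then consider "Q s = Q t" | "Q s < Q t" by linarith
  then show ?thesis
  proof cases
    case 1
    have "(s - mlt (Q t)) / mat (Q t) \<le> (t - mlt (Q t)) / mat (Q t)"
      using assms(3) by (intro divide_right_mono) (auto simp: mat_def sum_nonneg)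
    then have "(s - mlt (Q t)) / mat (Q t) * (measure (M j) {Q t} / k) \<le> (t - mlt (Q t)) / mat (Q t) * (measure (M j) {Q t} / k)"
      by (intro mult_right_mono) auto
    then show ?thesis using assms 1 by (simp add: c_def)
  next
    case 2
    interpret real_distribution "M j" using RD assms(1) by blast
    have "c j s \<le> cdf (M j) (Q s) / k" using c_mid_bounds[of j s] assms by auto
    also have "cdf (M j) (Q s) \<le> measure (M j) {..<Q t}"
      unfolding cdf_def using 2 by (intro finite_measure_mono) auto
    then have "cdf (M j) (Q s) / k \<le> measure (M j) {..<Q t} / k" by (simp add: divide_right_mono)
    also have "\<dots> \<le> c j t" using c_mid_bounds[of j t] assms by auto
    finally show ?thesis .
  qed
qed

lemma c_mono: "j < k \<Longrightarrow> s \<le> t \<Longrightarrow> c j s \<le> c j t"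
proof -
  assume jk: "j < k" and st: "s \<le> t"
  consider "s \<le> 0" | "1 \<le> t" | "0 < s \<and> t < 1" by linarith
  then show ?thesis
  proof cases
    case 1 then show ?thesis using c_nonneg[OF jk, of t] by (simp add: c_def)
  next
    case 2 then show ?thesis using c_le[OF jk, of s] st by (simp add: c_def)
  next
    case 3 then show ?thesis using c_mono_mid[OF jk] st by auto
  qed
qed

lemma c_lip01:
  assumes "j < k" "0 \<le> s" "s \<le> t" "t \<le> 1"
  shows "c j t - c j s \<le> t - s"
proof -
  have e1: "t - s = (\<Sum>j'<k. c j' t) - (\<Sum>j'<k. c j' s)" using c_sum assms by simp
  have e2: "(\<Sum>j'<k. c j' t) - (\<Sum>j'<k. c j' s) = (\<Sum>j'<k. c j' t - c j' s)" by (simp add: sum_subtractf)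
  have e3: "(\<Sum>j'<k. c j' t - c j' s) = (c j t - c j s) + (\<Sum>j'\<in>{..<k} - {j}. c j' t - c j' s)"
    using assms(1) by (subst sum.remove[of _ j]) auto
  have e4: "(\<Sum>j'\<in>{..<k} - {j}. c j' t - c j' s) \<ge> 0"
    using c_mono assms by (intro sum_nonneg) auto
  show ?thesis using e1 e2 e3 e4 by linarith
qed

definition cl :: "real \<Rightarrow> real" where "cl t = max 0 (min 1 t)"

lemma c_cl: "c j (cl t) = c j t"
  by (auto simp: c_def cl_def)

lemma c_lip: assumes "j < k" shows "\<bar>c j t - c j s\<bar> \<le> \<bar>t - s\<bar>"
proof -
  have *: "\<bar>c j t - c j s\<bar> \<le> \<bar>t - s\<bar>" if "s \<le> t" for s t
  proof -
    have "cl s \<le> cl t" using that by (auto simp: cl_def)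
    then have "c j (cl t) - c j (cl s) \<le> cl t - cl s"
      using c_lip01[OF assms, of "cl s" "cl t"] by (auto simp: cl_def)
    moreover have "c j (cl s) \<le> c j (cl t)" using c_mono[OF assms \<open>cl s \<le> cl t\<close>] .
    moreover have "cl t - cl s \<le> t - s" using that by (auto simp: cl_def)
    ultimately show ?thesis by (simp add: c_cl)
  qed
  show ?thesis using *[of s t] *[of t s] by (cases "s \<le> t") (auto simp: abs_minus_commute)
qed

lemma c_cont: "j < k \<Longrightarrow> isCont (c j) x"
proof -
  assume "j < k"
  have "lipschitz_on 1 UNIV (c j)"
    by (rule lipschitz_onI) (use c_lip[OF \<open>j<k\<close>] in \<open>auto simp: dist_real_def\<close>)
  then show ?thesis
    using lipschitz_on_continuous_on continuous_on_eq_continuous_at by blast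
qed

lemma c_G: assumes "j < k" shows "c j (G x) = cdf (M j) x / k"
proof -
  have cdf0: "0 \<le> cdf (M j') x" for j' by (simp add: cdf_def)
  consider "G x \<le> 0" | "1 \<le> G x" | "0 < G x \<and> G x < 1" by linarith
  then show ?thesis
  proof cases
    case 1
    then have "(\<Sum>j<k. cdf (M j) x) \<le> 0" using kpos by (simp add: G_def divide_le_0_iff)
    then have "\<forall>j\<in>{..<k}. cdf (M j) x = 0"
      using sum_nonneg_eq_0_iff[of "{..<k}" "\<lambda>j. cdf (M j) x"] cdf0
      by (metis (no_types, lifting) antisym finite_lessThan sum_nonneg)
    then show ?thesis using 1 assms by (simp add: c_def)
  next
    case 2
    then have "(\<Sum>j<k. cdf (M j) x) \<ge> k" using kpos by (simp add: G_def le_divide_eq)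
    then have "(\<Sum>j<k. 1 - cdf (M j) x) \<le> 0" by (simp add: sum_subtractf)
    moreover have "\<forall>j\<in>{..<k}. 0 \<le> 1 - cdf (M j) x" using cdf_le1 by auto
    ultimately have "\<forall>j\<in>{..<k}. 1 - cdf (M j) x = 0"
      using sum_nonneg_eq_0_iff[of "{..<k}" "\<lambda>j. 1 - cdf (M j) x"]
      by (metis (no_types, lifting) antisym finite_lessThan sum_nonneg)
    then show ?thesis using 2 assms by (simp add: c_def)
  next
    case 3
    let ?t = "G x" let ?y = "Q (G x)"
    have yx: "?y \<le> x" using pseudo[of ?t x] 3 by simp
    have Gy: "?t \<le> G ?y" using G_ge 3 by simp
    have Gmono: "G ?y \<le> G x" using right_continuous_mono.mono[OF G_rcm] yx by (simp add: monoD)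
    have cdf_mono: "cdf (M j') ?y \<le> cdf (M j') x" if "j' < k" for j'
      using finite_borel_measure.cdf_nondecreasing[OF FBM[OF that] yx] .
    have "(\<Sum>j'<k. cdf (M j') x - cdf (M j') ?y) = k * (G x - G ?y)"
      using kpos by (simp only: G_def) (simp add: sum_subtractf field_simps)
    also have "\<dots> = 0" using Gy Gmono by simp
    finally have "\<forall>j'\<in>{..<k}. cdf (M j') x - cdf (M j') ?y = 0"
      using sum_nonneg_eq_0_iff[of "{..<k}" "\<lambda>j'. cdf (M j') x - cdf (M j') ?y"] cdf_mono by auto
    then have eqx: "cdf (M j) ?y = cdf (M j) x" using assms by auto
    have tG: "?t = mlt ?y + mat ?y" using Gy Gmono G_split by simp
    show ?thesis
    proof (cases "mat ?y = 0")
      case True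
      have "(\<Sum>j'<k. measure (M j') {?y}) = 0" using True kpos by (simp add: mat_def)
      then have "measure (M j) {?y} = 0"
        using sum_nonneg_eq_0_iff[of "{..<k}" "\<lambda>j'. measure (M j') {?y}"] assms by auto
      then show ?thesis using 3 eqx meas_split[OF assms, of ?y] by (simp add: c_def)
    next
      case False
      then have "(?t - mlt ?y) / mat ?y = 1" using tG by simp
      then show ?thesis using 3 eqx meas_split[OF assms, of ?y] by (simp add: c_def flip: add_divide_distrib)
    qed
  qed
qed

end

lemma int_lb:
  assumes RDM: "real_distribution M" and cont: "continuous_on UNIV \<phi>"
    and bnd: "\<And>x. 0 \<le> \<phi> x \<and> \<phi> x \<le> 1" and one: "\<And>x. x \<in> S \<Longrightarrow> \<phi> x = 1"
    and S: "S \<in> sets borel"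
  shows "measure M S \<le> (\<integral>x. \<phi> x \<partial>M)"
proof -
  interpret real_distribution M by (rule RDM)
  have meas: "\<phi> \<in> borel_measurable M"
    using borel_measurable_continuous_onI[OF cont] measurable_cong_sets[OF events_eq_borel refl] by blast
  have int: "integrable M \<phi>"
    by (rule integrable_const_bound[where B=1]) (use bnd meas in auto)
  have intS: "integrable M (indicator S :: real \<Rightarrow> real)"
    using S emeasure_finite[of S] by (intro integrable_real_indicator) (auto simp: less_top[symmetric])
  have "measure M S = (\<integral>x. indicator S x \<partial>M)" by simp
  also have "\<dots> \<le> (\<integral>x. \<phi> x \<partial>M)"
    by (rule integral_mono[OF intS int]) (use bnd one in \<open>auto split: split_indicator\<close>)
  finally show ?thesis .
qed

lemma size_filter_sum: "real (size (filter_mset P A)) = (\<Sum>x\<in>#A. if P x then 1 else 0)"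
  by (induction A) auto

lemma sum_mset_le_size: "(\<And>x. 0 \<le> f x \<and> f x \<le> 1) \<Longrightarrow> (\<Sum>x\<in>#A. (f x :: real)) \<le> real (size A)"
  by (induction A) (auto simp: add_mono)

locale mixseq = mix +
  fixes Lam :: "nat \<Rightarrow> real multiset"
  assumes dinf: "filterlim (\<lambda>n. size (Lam n)) at_top sequentially"
    and H: "\<And>\<phi>. continuous_on UNIV \<phi> \<Longrightarrow> (\<exists>R. \<forall>x. R < \<bar>x\<bar> \<longrightarrow> \<phi> x = 0) \<Longrightarrow>
       (\<lambda>n. (\<Sum>x\<in>#Lam n. \<phi> x) / size (Lam n)) \<longlonglongrightarrow> (\<Sum>j<k. (\<integral>x. \<phi> x \<partial>M j)) / k"
begin

definition N :: "nat \<Rightarrow> real \<Rightarrow> nat" where "N n y = size (filter_mset (\<lambda>v. v \<le> y) (Lam n))"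

lemma N_le: "N n y \<le> size (Lam n)"
  unfolding N_def by (rule size_filter_mset_lesseq)

lemma dpos_ev: "eventually (\<lambda>n. 0 < size (Lam n)) sequentially"
proof -
  have "\<forall>Z. eventually (\<lambda>n. Z \<le> size (Lam n)) sequentially" using dinf by (simp add: filterlim_at_top)
  then have "eventually (\<lambda>n. 1 \<le> size (Lam n)) sequentially" by blast
  then show ?thesis by (rule eventually_mono) auto
qed

lemma lower:
  assumes at0: "\<And>j. j < k \<Longrightarrow> measure (M j) {y} = 0" and e: "\<epsilon> > 0"
  shows "eventually (\<lambda>n. G y - 3 * \<epsilon> < N n y / size (Lam n)) sequentially"
proof -
  have ev1: "eventually (\<lambda>x. \<forall>j\<in>{..<k}. cdf (M j) x < \<epsilon>) at_bot"
    using e by (intro eventually_ball_finite) (auto intro: order_tendstoD(2)[OF finite_borel_measure.cdf_lim_at_bot[OF FBM]])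
  then obtain lo0 where lo0: "\<And>x j. x \<le> lo0 \<Longrightarrow> j < k \<Longrightarrow> cdf (M j) x < \<epsilon>"
    unfolding eventually_at_bot_linorder by auto
  have ev2: "eventually (\<lambda>x. \<forall>j\<in>{..<k}. cdf (M j) y - \<epsilon> < cdf (M j) x) (at_left y)"
  proof (intro eventually_ball_finite ballI)
    fix j assume "j \<in> {..<k}"
    then have "isCont (cdf (M j)) y" using finite_borel_measure.isCont_cdf[OF FBM] at0 by auto
    then have "(cdf (M j) \<longlongrightarrow> cdf (M j) y) (at_left y)"
      by (simp add: isCont_def filterlim_at_split)
    then show "eventually (\<lambda>x. cdf (M j) y - \<epsilon> < cdf (M j) x) (at_left y)"
      using e by (intro order_tendstoD(1)) auto
  qed simp
  then obtain b where b: "b < y" "\<And>x j. b < x \<Longrightarrow> x < y \<Longrightarrow> j < k \<Longrightarrow> cdf (M j) y - \<epsilon> < cdf (M j) x"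
    unfolding eventually_at_left_field by auto
  define \<delta> where "\<delta> = min 1 ((y - b) / 2)"
  have dpos: "\<delta> > 0" and d1: "\<delta> \<le> 1" using b by (auto simp: \<delta>_def)
  have "\<delta> \<le> (y - b) / 2" unfolding \<delta>_def by (rule min.cobounded2)
  then have db: "b < y - \<delta>" using b(1) by argo
  define lo where "lo = min lo0 (y - 2)"
  have lolo0: "lo \<le> lo0" and loy: "lo < y - \<delta>" using d1 by (auto simp: lo_def)
  define \<phi> where "\<phi> x = max 0 (min 1 (min (x - lo + 1) ((y - x) / \<delta>)))" for x
  have cont: "continuous_on UNIV \<phi>" unfolding \<phi>_def by (intro continuous_intros) (use dpos in auto)
  have bnd: "0 \<le> \<phi> x \<and> \<phi> x \<le> 1" for x by (auto simp: \<phi>_def)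
  have zero_above: "\<phi> x = 0" if "y \<le> x" for x
  proof -
    have "(y - x) / \<delta> \<le> 0" using that dpos by (simp add: divide_nonpos_pos)
    then show ?thesis by (auto simp: \<phi>_def)
  qed
  have supp: "\<exists>R. \<forall>x. R < \<bar>x\<bar> \<longrightarrow> \<phi> x = 0"
  proof (intro exI[of _ "\<bar>lo\<bar> + \<bar>y\<bar> + 1"] allI impI)
    fix x assume "\<bar>lo\<bar> + \<bar>y\<bar> + 1 < \<bar>x\<bar>"
    then consider "y \<le> x" | "x \<le> lo - 1" by linarith
    then show "\<phi> x = 0"
    proof cases
      case 1 then show ?thesis by (rule zero_above)
    next
      case 2 then show ?thesis by (auto simp: \<phi>_def)
    qed
  qed
  have one: "\<phi> x = 1" if "x \<in> {lo<..y - \<delta>}" for x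
  proof -
    have "1 \<le> (y - x) / \<delta>" using that dpos by (simp add: le_divide_eq)
    then show ?thesis using that by (auto simp: \<phi>_def)
  qed
  have intlb: "cdf (M j) y - 2 * \<epsilon> \<le> (\<integral>x. \<phi> x \<partial>M j)" if "j < k" for j
  proof -
    have "measure (M j) {lo<..y - \<delta>} \<le> (\<integral>x. \<phi> x \<partial>M j)"
      by (rule int_lb[OF RD[OF that] cont bnd one]) auto
    moreover have "measure (M j) {lo<..y - \<delta>} = cdf (M j) (y - \<delta>) - cdf (M j) lo"
      using finite_borel_measure.cdf_diff_eq[OF FBM[OF that] loy] by simp
    moreover have "cdf (M j) lo < \<epsilon>" using lo0[OF lolo0 that] .
    moreover have "cdf (M j) y - \<epsilon> < cdf (M j) (y - \<delta>)" using b(2)[OF db _ that] dpos by auto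
    ultimately show ?thesis by linarith
  qed
  have "(\<Sum>j<k. cdf (M j) y - 2 * \<epsilon>) \<le> (\<Sum>j<k. (\<integral>x. \<phi> x \<partial>M j))"
    using intlb by (intro sum_mono) auto
  then have A: "(\<Sum>j<k. cdf (M j) y) - real k * (2 * \<epsilon>) \<le> (\<Sum>j<k. (\<integral>x. \<phi> x \<partial>M j))"
    by (simp add: sum_subtractf)
  have B: "G y - 2 * \<epsilon> = ((\<Sum>j<k. cdf (M j) y) - real k * (2 * \<epsilon>)) / k"
    using kpos by (simp add: G_def diff_divide_distrib)
  have "G y - 2 * \<epsilon> \<le> (\<Sum>j<k. (\<integral>x. \<phi> x \<partial>M j)) / k"
    unfolding B by (rule divide_right_mono[OF A]) simp
  then have "G y - 3 * \<epsilon> < (\<Sum>j<k. (\<integral>x. \<phi> x \<partial>M j)) / k" using e by linarith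
  then have ev: "eventually (\<lambda>n. G y - 3 * \<epsilon> < (\<Sum>x\<in>#Lam n. \<phi> x) / size (Lam n)) sequentially"
    by (rule order_tendstoD(1)[OF H[OF cont supp]])
  show ?thesis
  proof (rule eventually_mono[OF ev])
    fix n assume *: "G y - 3 * \<epsilon> < (\<Sum>x\<in>#Lam n. \<phi> x) / size (Lam n)"
    have "(\<Sum>x\<in>#Lam n. \<phi> x) \<le> (\<Sum>x\<in>#Lam n. if x \<le> y then 1 else 0)"
      by (rule sum_mset_mono) (use bnd zero_above in \<open>fastforce\<close>)
    also have "\<dots> = real (N n y)" by (simp add: N_def size_filter_sum)
    finally have "(\<Sum>x\<in>#Lam n. \<phi> x) / size (Lam n) \<le> N n y / size (Lam n)"
      by (simp add: divide_right_mono)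
    then show "G y - 3 * \<epsilon> < N n y / size (Lam n)" using * by linarith
  qed
qed

lemma upper:
  assumes at0: "\<And>j. j < k \<Longrightarrow> measure (M j) {y} = 0" and e: "\<epsilon> > 0"
  shows "eventually (\<lambda>n. N n y / size (Lam n) < G y + 3 * \<epsilon>) sequentially"
proof -
  have ev1: "eventually (\<lambda>x. \<forall>j\<in>{..<k}. 1 - \<epsilon> < cdf (M j) x) at_top"
    using e by (intro eventually_ball_finite) (auto intro: order_tendstoD(1)[OF real_distribution.cdf_lim_at_top_prob[OF RD]])
  then obtain hi0 where hi0: "\<And>x j. hi0 \<le> x \<Longrightarrow> j < k \<Longrightarrow> 1 - \<epsilon> < cdf (M j) x"
    unfolding eventually_at_top_linorder by auto
  have ev2: "eventually (\<lambda>x. \<forall>j\<in>{..<k}. cdf (M j) x < cdf (M j) y + \<epsilon>) (at_right y)"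
  proof (intro eventually_ball_finite ballI)
    fix j assume "j \<in> {..<k}"
    then have "isCont (cdf (M j)) y" using finite_borel_measure.isCont_cdf[OF FBM] at0 by auto
    then have "(cdf (M j) \<longlongrightarrow> cdf (M j) y) (at_right y)"
      by (simp add: isCont_def filterlim_at_split)
    then show "eventually (\<lambda>x. cdf (M j) x < cdf (M j) y + \<epsilon>) (at_right y)"
      using e by (intro order_tendstoD(2)) auto
  qed simp
  then obtain b where b: "y < b" "\<And>x j. y < x \<Longrightarrow> x < b \<Longrightarrow> j < k \<Longrightarrow> cdf (M j) x < cdf (M j) y + \<epsilon>"
    unfolding eventually_at_right_field by auto
  define \<delta> where "\<delta> = min 1 ((b - y) / 2)"
  have dpos: "\<delta> > 0" and d1: "\<delta> \<le> 1" using b by (auto simp: \<delta>_def)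
  have "\<delta> \<le> (b - y) / 2" unfolding \<delta>_def by (rule min.cobounded2)
  then have db: "y + \<delta> < b" using b(1) by argo
  define hi where "hi = max hi0 (y + 2)"
  have hihi0: "hi0 \<le> hi" and hiy: "y + \<delta> < hi" using d1 by (auto simp: hi_def)
  define \<phi> where "\<phi> x = max 0 (min 1 (min (hi + 1 - x) ((x - y) / \<delta>)))" for x
  have cont: "continuous_on UNIV \<phi>" unfolding \<phi>_def by (intro continuous_intros) (use dpos in auto)
  have bnd: "0 \<le> \<phi> x \<and> \<phi> x \<le> 1" for x by (auto simp: \<phi>_def)
  have zero_below: "\<phi> x = 0" if "x \<le> y" for x
  proof -
    have "(x - y) / \<delta> \<le> 0" using that dpos by (simp add: divide_nonpos_pos)
    then show ?thesis by (auto simp: \<phi>_def)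
  qed
  have supp: "\<exists>R. \<forall>x. R < \<bar>x\<bar> \<longrightarrow> \<phi> x = 0"
  proof (intro exI[of _ "\<bar>hi\<bar> + \<bar>y\<bar> + 1"] allI impI)
    fix x assume "\<bar>hi\<bar> + \<bar>y\<bar> + 1 < \<bar>x\<bar>"
    then consider "x \<le> y" | "hi + 1 \<le> x" by linarith
    then show "\<phi> x = 0"
    proof cases
      case 1 then show ?thesis by (rule zero_below)
    next
      case 2 then show ?thesis by (auto simp: \<phi>_def)
    qed
  qed
  have one: "\<phi> x = 1" if "x \<in> {y + \<delta><..hi}" for x
  proof -
    have "1 \<le> (x - y) / \<delta>" using that dpos by (simp add: le_divide_eq)
    then show ?thesis using that by (auto simp: \<phi>_def)
  qed
  have intlb: "1 - cdf (M j) y - 2 * \<epsilon> \<le> (\<integral>x. \<phi> x \<partial>M j)" if "j < k" for j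
  proof -
    have "measure (M j) {y + \<delta><..hi} \<le> (\<integral>x. \<phi> x \<partial>M j)"
      by (rule int_lb[OF RD[OF that] cont bnd one]) auto
    moreover have "measure (M j) {y + \<delta><..hi} = cdf (M j) hi - cdf (M j) (y + \<delta>)"
      using finite_borel_measure.cdf_diff_eq[OF FBM[OF that] hiy] by simp
    moreover have "1 - \<epsilon> < cdf (M j) hi" using hi0[OF hihi0 that] .
    moreover have "cdf (M j) (y + \<delta>) < cdf (M j) y + \<epsilon>" using b(2)[OF _ db that] dpos by auto
    ultimately show ?thesis by linarith
  qed
  have "(\<Sum>j<k. 1 - cdf (M j) y - 2 * \<epsilon>) \<le> (\<Sum>j<k. (\<integral>x. \<phi> x \<partial>M j))"
    using intlb by (intro sum_mono) auto
  then have A: "real k - (\<Sum>j<k. cdf (M j) y) - real k * (2 * \<epsilon>) \<le> (\<Sum>j<k. (\<integral>x. \<phi> x \<partial>M j))"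
    by (simp add: sum_subtractf)
  have B: "1 - G y - 2 * \<epsilon> = (real k - (\<Sum>j<k. cdf (M j) y) - real k * (2 * \<epsilon>)) / k"
    using kpos by (simp add: G_def diff_divide_distrib)
  have "1 - G y - 2 * \<epsilon> \<le> (\<Sum>j<k. (\<integral>x. \<phi> x \<partial>M j)) / k"
    unfolding B by (rule divide_right_mono[OF A]) simp
  then have "1 - G y - 3 * \<epsilon> < (\<Sum>j<k. (\<integral>x. \<phi> x \<partial>M j)) / k" using e by linarith
  then have ev: "eventually (\<lambda>n. 1 - G y - 3 * \<epsilon> < (\<Sum>x\<in>#Lam n. \<phi> x) / size (Lam n)) sequentially"
    by (rule order_tendstoD(1)[OF H[OF cont supp]])
  show ?thesis
  proof (rule eventually_mono[OF eventually_conj[OF ev dpos_ev]])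
    fix n assume *: "1 - G y - 3 * \<epsilon> < (\<Sum>x\<in>#Lam n. \<phi> x) / size (Lam n) \<and> 0 < size (Lam n)"
    have "real (N n y) + (\<Sum>x\<in>#Lam n. \<phi> x) = (\<Sum>x\<in>#Lam n. (if x \<le> y then 1 else 0) + \<phi> x)"
      by (simp add: N_def size_filter_sum sum_mset.distrib)
    also have "\<dots> \<le> real (size (Lam n))"
      by (rule sum_mset_le_size) (use bnd zero_below in \<open>fastforce\<close>)
    finally have S: "real (N n y) + (\<Sum>x\<in>#Lam n. \<phi> x) \<le> real (size (Lam n))" .
    have "(real (N n y) + (\<Sum>x\<in>#Lam n. \<phi> x)) / size (Lam n) \<le> real (size (Lam n)) / size (Lam n)"
      by (rule divide_right_mono[OF S]) simp
    then have "real (N n y) / size (Lam n) + (\<Sum>x\<in>#Lam n. \<phi> x) / size (Lam n) \<le> 1"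
      using * by (auto simp: add_divide_distrib split: if_splits)
    then show "N n y / size (Lam n) < G y + 3 * \<epsilon>" using * by linarith
  qed
qed

lemma Nconv:
  assumes at0: "\<And>j. j < k \<Longrightarrow> measure (M j) {y} = 0"
  shows "(\<lambda>n. N n y / size (Lam n)) \<longlonglongrightarrow> G y"
proof (rule order_tendstoI)
  fix a assume "a < G y"
  then have "(G y - a) / 3 > 0" by simp
  have eq: "G y - 3 * ((G y - a) / 3) = a" by argo
  from lower[OF at0 \<open>(G y - a) / 3 > 0\<close>] show "eventually (\<lambda>n. a < N n y / size (Lam n)) sequentially"
    unfolding eq .
next
  fix a assume "G y < a"
  then have "(a - G y) / 3 > 0" by simp
  have eq: "G y + 3 * ((a - G y) / 3) = a" by argo
  from upper[OF at0 \<open>(a - G y) / 3 > 0\<close>] show "eventually (\<lambda>n. N n y / size (Lam n) < a) sequentially"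
    unfolding eq .
qed

end

locale mixpart = mixseq +
  fixes L :: "nat \<Rightarrow> nat \<Rightarrow> nat"
  assumes Lsum: "\<And>n. (\<Sum>j<k. L n j) = size (Lam n)"
    and Lconv: "\<And>j. j < k \<Longrightarrow> (\<lambda>n. real (L n j) / real (size (Lam n))) \<longlonglongrightarrow> 1 / real k"
begin

definition d :: "nat \<Rightarrow> nat" where "d n = size (Lam n)"
definition s :: "nat \<Rightarrow> real" where "s n = (\<Sum>j<k. \<bar>real (L n j) / real (d n) - 1 / k\<bar>)"
definition th :: "nat \<Rightarrow> real" where "th n = min 1 (k * s n)"
definition w :: "nat \<Rightarrow> nat \<Rightarrow> real" where "w n j = real (L n j) / real (d n) - (1 - th n) / k"
definition ct :: "nat \<Rightarrow> nat \<Rightarrow> real \<Rightarrow> real" where "ct n j t = (1 - th n) * c j t + w n j * t"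
definition T :: "nat \<Rightarrow> nat \<Rightarrow> nat \<Rightarrow> real" where "T n j i = real (d n) * ct n j (real i / real (d n))"
definition E :: "nat \<Rightarrow> real" where "E n = k / real (d n) + 2 * th n + s n"

lemma s_nonneg: "0 \<le> s n" by (simp add: s_def sum_nonneg)
lemma th_bounds: "0 \<le> th n" "th n \<le> 1" using s_nonneg[of n] by (auto simp: th_def)

lemma dev_le_s: "j < k \<Longrightarrow> \<bar>real (L n j) / real (d n) - 1 / k\<bar> \<le> s n"
  unfolding s_def by (rule member_le_sum[of j "{..<k}" "\<lambda>j. \<bar>real (L n j) / real (d n) - 1 / k\<bar>"]) auto

lemma L_sum_real: "(\<Sum>j<k. real (L n j)) = real (d n)"
  using Lsum[of n] by (simp add: d_def flip: of_nat_sum)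

lemma w_nonneg: assumes "j < k" "0 < d n" shows "0 \<le> w n j"
proof (cases "th n = 1")
  case True then show ?thesis by (simp add: w_def)
next
  case False
  then have "th n = k * s n" by (auto simp: th_def min_def split: if_splits)
  then have "s n = th n / k" using kpos by simp
  then have "\<bar>real (L n j) / real (d n) - 1 / k\<bar> \<le> th n / k" using dev_le_s[OF assms(1), of n] by simp
  then have "1 / k - th n / k \<le> real (L n j) / real (d n)" by linarith
  then show ?thesis by (simp add: w_def diff_divide_distrib)
qed

lemma w_sum: assumes "0 < d n" shows "(\<Sum>j<k. w n j) = th n"
proof -
  have "(\<Sum>j<k. real (L n j) / real (d n)) = 1"
    using assms by (simp add: L_sum_real flip: sum_divide_distrib)
  then show ?thesis using kpos by (simp add: w_def sum_subtractf)
qed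

lemma w_abs: assumes "j < k" shows "\<bar>w n j\<bar> \<le> s n + th n"
proof -
  have "w n j = (real (L n j) / real (d n) - 1 / k) + th n / k"
    unfolding w_def by (simp add: diff_divide_distrib)
  then have A: "\<bar>w n j\<bar> \<le> \<bar>real (L n j) / real (d n) - 1 / k\<bar> + \<bar>th n / k\<bar>"
    using abs_triangle_ineq by metis
  have B: "\<bar>th n / k\<bar> \<le> th n"
  proof -
    have "1 \<le> real k" using kpos by simp
    then have "th n * 1 \<le> th n * real k" using th_bounds[of n] by (intro mult_left_mono) auto
    then show ?thesis using th_bounds[of n] kpos by (simp add: divide_le_eq)
  qed
  show ?thesis using A B dev_le_s[OF assms, of n] by linarith
qed

lemma ct_mono: assumes "j < k" "0 < d n" "t \<le> t'" "0 \<le> t" shows "ct n j t \<le> ct n j t'"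
proof -
  have "(1 - th n) * c j t \<le> (1 - th n) * c j t'"
    using th_bounds c_mono[OF assms(1,3)] by (intro mult_left_mono) auto
  moreover have "w n j * t \<le> w n j * t'" using w_nonneg[OF assms(1,2)] assms(3) by (intro mult_left_mono)
  ultimately show ?thesis by (simp add: ct_def)
qed

lemma ct_sum: assumes "0 < d n" "0 \<le> t" "t \<le> 1" shows "(\<Sum>j<k. ct n j t) = t"
proof -
  have "(\<Sum>j<k. ct n j t) = (1 - th n) * (\<Sum>j<k. c j t) + (\<Sum>j<k. w n j) * t"
    by (simp add: ct_def sum.distrib sum_distrib_left sum_distrib_right)
  also have "\<dots> = t" using c_sum[OF assms(2,3)] w_sum[OF assms(1)] by (simp add: algebra_simps)
  finally show ?thesis .
qed

lemma ct_one: assumes "j < k" shows "real (d n) * ct n j 1 = real (L n j)"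
proof (cases "d n = 0")
  case True
  then have "(\<Sum>j<k. L n j) = 0" using Lsum[of n] by (simp add: d_def)
  then have "L n j = 0" using assms by simp
  then show ?thesis using True by simp
next
  case False
  then show ?thesis using kpos by (simp add: ct_def c_def w_def field_simps)
qed

lemma ct_close: assumes "j < k" "0 \<le> t" "t \<le> 1" shows "\<bar>ct n j t - c j t\<bar> \<le> 2 * th n + s n"
proof -
  have "ct n j t - c j t = - th n * c j t + w n j * t" by (simp add: ct_def algebra_simps)
  then have "\<bar>ct n j t - c j t\<bar> \<le> \<bar>th n * c j t\<bar> + \<bar>w n j * t\<bar>" by simp
  also have "\<bar>th n * c j t\<bar> \<le> th n"
  proof -
    have "c j t \<le> 1" using c_le[OF assms(1), of t] kpos by (simp add: divide_le_eq order_trans)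
    then show ?thesis using th_bounds c_nonneg[OF assms(1), of t] by (simp add: abs_mult mult_left_le)
  qed
  also have "\<bar>w n j * t\<bar> \<le> \<bar>w n j\<bar>" using assms by (simp add: abs_mult mult_left_le)
  finally show ?thesis using w_abs[OF assms(1), of n] by linarith
qed

lemma greedy_ok: "\<exists>g. (\<forall>i<d n. g i < k) \<and> (\<forall>j<k. card {i. i < d n \<and> g i = j} = L n j) \<and>
     (\<forall>j<k. \<forall>m\<le>d n. \<bar>real (card {i. i < m \<and> g i = j}) - T n j m\<bar> \<le> real k)"
proof (rule greedy_partition)
  fix i assume i: "i \<le> d n"
  show "(\<Sum>j<k. T n j i) = real i"
  proof (cases "d n = 0")
    case True then show ?thesis using i by (simp add: T_def)
  next
    case False
    then have "(\<Sum>j<k. ct n j (real i / real (d n))) = real i / real (d n)"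
      using i by (intro ct_sum) auto
    then show ?thesis using False by (simp add: T_def flip: sum_distrib_left)
  qed
next
  fix j i assume "j < k" "i < d n"
  then show "T n j i \<le> T n j (Suc i)"
    unfolding T_def by (intro mult_left_mono ct_mono) (auto simp: divide_right_mono)
next
  fix j assume "j < k" then show "T n j (d n) = real (L n j)"
    using ct_one[of j n] by (cases "d n = 0") (auto simp: T_def)
next
  fix j assume "j < k" then show "T n j 0 = 0" by (simp add: T_def ct_def c_def)
qed

definition GP :: "nat \<Rightarrow> (nat \<Rightarrow> nat) \<Rightarrow> bool" where
  "GP n g \<longleftrightarrow> (\<forall>i<d n. g i < k) \<and> (\<forall>j<k. card {i. i < d n \<and> g i = j} = L n j) \<and>
     (\<forall>j<k. \<forall>m\<le>d n. \<bar>real (card {i. i < m \<and> g i = j}) - T n j m\<bar> \<le> real k)"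

definition gsel :: "nat \<Rightarrow> nat \<Rightarrow> nat" where "gsel = (SOME G. \<forall>n. GP n (G n))"

lemma gsel: "GP n (gsel n)"
proof -
  have "\<forall>n. \<exists>g. GP n g" using greedy_ok unfolding GP_def by blast
  then have "\<exists>G. \<forall>n. GP n (G n)" by (rule choice)
  from someI_ex[OF this] show ?thesis unfolding gsel_def by blast
qed

definition K :: "nat \<Rightarrow> nat \<Rightarrow> nat \<Rightarrow> nat" where "K n j m = card {i. i < m \<and> gsel n i = j}"

lemma K_mono: "m \<le> m' \<Longrightarrow> K n j m \<le> K n j m'"
  unfolding K_def by (rule card_mono) auto

lemma K_bound:
  assumes "j < k" "0 < d n" "m \<le> d n"
  shows "\<bar>real (K n j m) / real (d n) - c j (real m / real (d n))\<bar> \<le> E n"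
proof -
  let ?t = "real m / real (d n)"
  have "\<bar>real (K n j m) - T n j m\<bar> \<le> real k"
    using gsel[of n] assms unfolding GP_def K_def by blast
  then have "\<bar>real (K n j m) - real (d n) * ct n j ?t\<bar> / real (d n) \<le> real k / real (d n)"
    unfolding T_def by (intro divide_right_mono) auto
  moreover have "real (K n j m) / real (d n) - ct n j ?t = (real (K n j m) - real (d n) * ct n j ?t) / real (d n)"
    using assms(2) by (simp add: field_simps)
  moreover have "\<bar>(real (K n j m) - real (d n) * ct n j ?t) / real (d n)\<bar> = \<bar>real (K n j m) - real (d n) * ct n j ?t\<bar> / real (d n)"
    by (simp add: abs_divide)
  ultimately have A: "\<bar>real (K n j m) / real (d n) - ct n j ?t\<bar> \<le> real k / real (d n)" by simp
  have B: "\<bar>ct n j ?t - c j ?t\<bar> \<le> 2 * th n + s n"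
    using assms by (intro ct_close) auto
  show ?thesis using A B unfolding E_def by linarith
qed

lemma d_at_top: "filterlim (\<lambda>n. real (d n)) at_top sequentially"
  unfolding d_def by (rule filterlim_compose[OF filterlim_real_sequentially dinf])

lemma s_lim: "s \<longlonglongrightarrow> 0"
proof -
  have "(\<lambda>n. \<Sum>j<k. \<bar>real (L n j) / real (d n) - 1 / k\<bar>) \<longlonglongrightarrow> (\<Sum>j<k. 0)"
    by (intro tendsto_sum tendsto_rabs_zero LIM_zero) (use Lconv in \<open>auto simp: d_def\<close>)
  then show ?thesis by (simp add: s_def[abs_def])
qed

lemma th_lim: "th \<longlonglongrightarrow> 0"
proof -
  have "(\<lambda>n. min 1 (real k * s n)) \<longlonglongrightarrow> min 1 (real k * 0)"
    by (intro tendsto_min tendsto_const tendsto_mult s_lim)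
  then show ?thesis by (simp add: th_def[abs_def])
qed

lemma E_lim: "E \<longlonglongrightarrow> 0"
proof -
  have "(\<lambda>n. real k / real (d n)) \<longlonglongrightarrow> 0"
    by (rule tendsto_divide_0[OF tendsto_const filterlim_at_top_imp_at_infinity[OF d_at_top]])
  then have "(\<lambda>n. real k / real (d n) + 2 * th n + s n) \<longlonglongrightarrow> 0 + 2 * 0 + 0"
    by (intro tendsto_add tendsto_mult tendsto_const th_lim s_lim)
  then show ?thesis by (simp add: E_def[abs_def])
qed

lemma dpos_ev': "eventually (\<lambda>n. 0 < d n) sequentially"
  using dpos_ev by (simp add: d_def)

lemma conv1:
  assumes j: "j < k" and at0: "\<And>j. j < k \<Longrightarrow> measure (M j) {y} = 0"
  shows "(\<lambda>n. real (K n j (N n y)) / real (d n)) \<longlonglongrightarrow> cdf (M j) y / k"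
proof -
  have "(\<lambda>n. c j (real (N n y) / real (d n))) \<longlonglongrightarrow> c j (G y)"
    by (rule isCont_tendsto_compose[OF c_cont[OF j]]) (use Nconv[OF at0] in \<open>simp add: d_def\<close>)
  then have l1: "(\<lambda>n. c j (real (N n y) / real (d n))) \<longlonglongrightarrow> cdf (M j) y / k"
    using c_G[OF j] by simp
  have l2: "(\<lambda>n. real (K n j (N n y)) / real (d n) - c j (real (N n y) / real (d n))) \<longlonglongrightarrow> 0"
  proof (rule Lim_null_comparison[OF _ E_lim])
    show "eventually (\<lambda>n. norm (real (K n j (N n y)) / real (d n) - c j (real (N n y) / real (d n))) \<le> E n) sequentially"
      using dpos_ev' by eventually_elim (use K_bound[OF j] N_le in \<open>auto simp: d_def\<close>)
  qed
  have "(\<lambda>n. (real (K n j (N n y)) / real (d n) - c j (real (N n y) / real (d n))) + c j (real (N n y) / real (d n)))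
        \<longlonglongrightarrow> 0 + cdf (M j) y / k"
    by (rule tendsto_add[OF l2 l1])
  then show ?thesis by simp
qed

lemma N_mono: "y \<le> x \<Longrightarrow> N n y \<le> N n x"
proof -
  assume "y \<le> x"
  have "real (N n y) \<le> real (N n x)"
    unfolding N_def size_filter_sum by (rule sum_mset_mono) (use \<open>y \<le> x\<close> in auto)
  then show ?thesis by simp
qed

definition atoms :: "real set" where "atoms = (\<Union>j<k. {x. measure (M j) {x} > 0})"

lemma countable_atoms': "countable atoms"
  unfolding atoms_def by (intro countable_UN) (auto intro: finite_borel_measure.countable_atoms[OF FBM])

lemma not_atom: "y \<notin> atoms \<Longrightarrow> j < k \<Longrightarrow> measure (M j) {y} = 0"
proof -
  assume "y \<notin> atoms" "j < k"
  then have "\<not> measure (M j) {y} > 0" by (auto simp: atoms_def)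
  then show ?thesis using measure_nonneg[of "M j" "{y}"] by linarith
qed

lemma conv2:
  assumes j: "j < k" and cx: "isCont (cdf (M j)) x"
  shows "(\<lambda>n. real (K n j (N n x)) / real (d n)) \<longlonglongrightarrow> cdf (M j) x / k"
proof (rule order_tendstoI)
  fix a assume a: "a < cdf (M j) x / k"
  have "(cdf (M j) \<longlongrightarrow> cdf (M j) x) (at_left x)" using cx by (simp add: isCont_def filterlim_at_split)
  then have "((\<lambda>z. cdf (M j) z / k) \<longlongrightarrow> cdf (M j) x / k) (at_left x)" by (intro tendsto_divide tendsto_const) (use kpos in auto)
  then have "eventually (\<lambda>z. a < cdf (M j) z / k) (at_left x)" using a by (rule order_tendstoD(1))
  then obtain b where b: "b < x" "\<And>z. b < z \<Longrightarrow> z < x \<Longrightarrow> a < cdf (M j) z / k"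
    unfolding eventually_at_left_field by auto
  obtain y where y: "y \<in> {b<..<x}" "y \<notin> atoms"
    using real_interval_avoid_countable_set[OF b(1) countable_atoms'] by blast
  have "eventually (\<lambda>n. a < real (K n j (N n y)) / real (d n)) sequentially"
    using conv1[OF j not_atom[OF y(2)]] b(2)[of y] y(1) by (auto intro: order_tendstoD(1))
  then show "eventually (\<lambda>n. a < real (K n j (N n x)) / real (d n)) sequentially"
  proof eventually_elim
    case (elim n)
    have "K n j (N n y) \<le> K n j (N n x)" using y(1) by (intro K_mono N_mono) auto
    then have "real (K n j (N n y)) / real (d n) \<le> real (K n j (N n x)) / real (d n)"
      by (intro divide_right_mono) auto
    then show ?case using elim by linarith
  qed
next
  fix a assume a: "cdf (M j) x / k < a"
  have "(cdf (M j) \<longlongrightarrow> cdf (M j) x) (at_right x)"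
    using finite_borel_measure.cdf_is_right_cont[OF FBM[OF j]] by (simp add: continuous_within)
  then have "((\<lambda>z. cdf (M j) z / k) \<longlongrightarrow> cdf (M j) x / k) (at_right x)" by (intro tendsto_divide tendsto_const) (use kpos in auto)
  then have "eventually (\<lambda>z. cdf (M j) z / k < a) (at_right x)" using a by (rule order_tendstoD(2))
  then obtain b where b: "x < b" "\<And>z. x < z \<Longrightarrow> z < b \<Longrightarrow> cdf (M j) z / k < a"
    unfolding eventually_at_right_field by auto
  obtain y where y: "y \<in> {x<..<b}" "y \<notin> atoms"
    using real_interval_avoid_countable_set[OF b(1) countable_atoms'] by blast
  have "eventually (\<lambda>n. real (K n j (N n y)) / real (d n) < a) sequentially"
    using conv1[OF j not_atom[OF y(2)]] b(2)[of y] y(1) by (auto intro: order_tendstoD(2))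
  then show "eventually (\<lambda>n. real (K n j (N n x)) / real (d n) < a) sequentially"
  proof eventually_elim
    case (elim n)
    have "K n j (N n x) \<le> K n j (N n y)" using y(1) by (intro K_mono N_mono) auto
    then have "real (K n j (N n x)) / real (d n) \<le> real (K n j (N n y)) / real (d n)"
      by (intro divide_right_mono) auto
    then show ?case using elim by linarith
  qed
qed

lemma conv3:
  assumes j: "j < k" and cx: "isCont (cdf (M j)) x"
  shows "(\<lambda>n. real (K n j (N n x)) / real (L n j)) \<longlonglongrightarrow> cdf (M j) x"
proof -
  have inv: "(\<lambda>n. inverse (real (L n j) / real (size (Lam n)))) \<longlonglongrightarrow> inverse (1 / real k)"
    by (rule tendsto_inverse[OF Lconv[OF j]]) (use kpos in auto)
  have "(\<lambda>n. real (K n j (N n x)) / real (d n) * inverse (real (L n j) / real (size (Lam n))))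
        \<longlonglongrightarrow> cdf (M j) x / k * inverse (1 / real k)"
    by (rule tendsto_mult[OF conv2[OF j cx] inv])
  then have lim: "(\<lambda>n. real (K n j (N n x)) / real (d n) * (real (d n) / real (L n j))) \<longlonglongrightarrow> cdf (M j) x"
    using kpos by (simp add: d_def)
  show ?thesis
  proof (rule Lim_transform_eventually[OF lim])
    show "eventually (\<lambda>n. real (K n j (N n x)) / real (d n) * (real (d n) / real (L n j)) =
            real (K n j (N n x)) / real (L n j)) sequentially"
      using dpos_ev' by eventually_elim auto
  qed
qed

lemma L_at_top: assumes j: "j < k" shows "filterlim (\<lambda>n. L n j) at_top sequentially"
proof -
  have "filterlim (\<lambda>n. real (L n j) / real (d n) * real (d n)) at_top sequentially"
    by (rule filterlim_tendsto_pos_mult_at_top[OF _ _ d_at_top]) (use Lconv[OF j] kpos in \<open>auto simp: d_def\<close>)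
  then have r: "filterlim (\<lambda>n. real (L n j)) at_top sequentially"
  proof (rule filterlim_cong[THEN iffD1, rotated 3])
    show "eventually (\<lambda>n. real (L n j) / real (d n) * real (d n) = real (L n j)) sequentially"
      using dpos_ev' by eventually_elim auto
  qed auto
  show ?thesis unfolding filterlim_at_top
  proof
    fix Z :: nat
    have "\<forall>Z'::real. eventually (\<lambda>n. Z' \<le> real (L n j)) sequentially" using r by (simp add: filterlim_at_top)
    then have "eventually (\<lambda>n. real Z \<le> real (L n j)) sequentially" by blast
    then show "eventually (\<lambda>n. Z \<le> L n j) sequentially" by (rule eventually_mono) simp
  qed
qed

definition xs :: "nat \<Rightarrow> real list" where "xs n = sorted_list_of_multiset (Lam n)"
definition P :: "nat \<Rightarrow> nat \<Rightarrow> real multiset" where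
  "P n j = mset (map (nth (xs n)) (filter (\<lambda>i. gsel n i = j) [0..<d n]))"

lemma len_xs: "length (xs n) = d n"
  by (metis d_def mset_sorted_list_of_multiset size_mset xs_def)

lemma P_sum: "(\<Sum>j<k. P n j) = Lam n"
proof -
  have "(\<Sum>j<k. P n j) = (\<Sum>j<k. mset (map (nth (xs n)) (filter (\<lambda>i. gsel n i = j) [0..<length (xs n)])))"
    by (simp add: P_def len_xs)
  also have "\<dots> = mset (xs n)"
    by (rule part_sum_map) (use gsel[of n] in \<open>auto simp: GP_def len_xs\<close>)
  also have "\<dots> = Lam n" by (simp add: xs_def)
  finally show ?thesis .
qed

lemma P_size: "j < k \<Longrightarrow> size (P n j) = L n j"
  using gsel[of n] by (simp add: P_def length_filter_upt GP_def)

lemma P_count: "size (filter_mset (\<lambda>v. v \<le> x) (P n j)) = K n j (N n x)"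
proof -
  have "size (filter_mset (\<lambda>v. v \<le> x) (P n j))
      = length (filter (\<lambda>v. v \<le> x) (map (nth (xs n)) (filter (\<lambda>i. gsel n i = j) [0..<length (xs n)])))"
    by (simp only: P_def len_xs mset_filter[symmetric] size_mset)
  also have "\<dots> = card {i. i < length (filter (\<lambda>v. v \<le> x) (xs n)) \<and> gsel n i = j}"
    by (rule sorted_part_count) (simp add: xs_def)
  also have "length (filter (\<lambda>v. v \<le> x) (xs n)) = N n x"
    by (metis N_def mset_filter mset_sorted_list_of_multiset size_mset xs_def)
  finally show ?thesis by (simp add: K_def)
qed

theorem main_abstract:
  "\<exists>P :: nat \<Rightarrow> nat \<Rightarrow> real multiset.
     (\<forall>n. (\<Sum>j<k. P n j) = Lam n \<and> (\<forall>j<k. size (P n j) = L n j)) \<and>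
     (\<forall>j<k. filterlim (\<lambda>n. size (P n j)) at_top sequentially \<and>
        (\<forall>x. isCont (cdf (M j)) x \<longrightarrow>
           (\<lambda>n. real (size (filter_mset (\<lambda>v. v \<le> x) (P n j))) / real (size (P n j))) \<longlonglongrightarrow> cdf (M j) x))"
proof (rule exI[of _ P], intro conjI allI impI)
  fix n show "(\<Sum>j<k. P n j) = Lam n" by (rule P_sum)
next
  fix n j :: nat assume "j < k" then show "size (P n j) = L n j" by (rule P_size)
next
  fix j assume "j < k" then show "filterlim (\<lambda>n. size (P n j)) at_top sequentially"
    using L_at_top by (simp add: P_size)
next
  fix j x assume "j < k" "isCont (cdf (M j)) x"
  then show "(\<lambda>n. real (size (filter_mset (\<lambda>v. v \<le> x) (P n j))) / real (size (P n j))) \<longlonglongrightarrow> cdf (M j) x"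
    using conv3 by (simp add: P_size P_count)
qed

end

definition M0 :: "real \<Rightarrow> real \<Rightarrow> real measure" where
  "M0 a b = density lborel (\<lambda>x. ennreal (indicator {a..b} x / (b - a)))"
definition gg :: "real \<Rightarrow> real \<Rightarrow> (real \<Rightarrow> real) \<Rightarrow> real \<Rightarrow> real" where
  "gg a b h x = indicator {a..b} x * h x"
definition Mf :: "real \<Rightarrow> real \<Rightarrow> (real \<Rightarrow> real) \<Rightarrow> real measure" where
  "Mf a b h = distr (M0 a b) borel (gg a b h)"

lemma sets_M0[simp]: "sets (M0 a b) = sets borel" by (simp add: M0_def)
lemma space_M0[simp]: "space (M0 a b) = UNIV" by (simp add: M0_def)

lemma M0_prob: assumes "a < b" shows "prob_space (M0 a b)"
proof (rule prob_spaceI)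
  have eq: "ennreal (indicator {a..b} x / (b - a)) * indicator UNIV x = ennreal (1 / (b - a)) * indicator {a..b} x" for x
    by (auto split: split_indicator)
  have "emeasure (M0 a b) UNIV = (\<integral>\<^sup>+x. ennreal (indicator {a..b} x / (b - a)) * indicator UNIV x \<partial>lborel)"
    unfolding M0_def by (rule emeasure_density) auto
  also have "\<dots> = (\<integral>\<^sup>+x. ennreal (1 / (b - a)) * indicator {a..b} x \<partial>lborel)"
    by (intro nn_integral_cong) (simp only: eq)
  also have "\<dots> = ennreal (1 / (b - a)) * ennreal (b - a)"
    using assms by (subst nn_integral_cmult_indicator) auto
  also have "\<dots> = 1" using assms by (simp flip: ennreal_mult)
  finally show "emeasure (M0 a b) (space (M0 a b)) = 1" by simp
qed

lemma gg_meas: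
  assumes "set_borel_measurable lborel {a..b} h"
  shows "gg a b h \<in> borel_measurable (M0 a b)" "gg a b h \<in> borel_measurable lborel"
proof -
  have "(\<lambda>x. indicator {a..b} x *\<^sub>R h x) \<in> borel_measurable lborel" using assms by (simp add: set_borel_measurable_def)
  then show *: "gg a b h \<in> borel_measurable lborel" by (simp add: gg_def[abs_def])
  show "gg a b h \<in> borel_measurable (M0 a b)"
    using * by (simp add: measurable_cong_sets[of "M0 a b" lborel borel borel])
qed

lemma Mf_rd: assumes "a < b" "set_borel_measurable lborel {a..b} h" shows "real_distribution (Mf a b h)"
proof -
  interpret prob_space "M0 a b" by (rule M0_prob[OF assms(1)])
  show ?thesis unfolding Mf_def by (intro real_distribution_distr) (use gg_meas[OF assms(2)] in simp)
qed

lemma F_cont: "continuous_on UNIV F \<Longrightarrow> continuous_on UNIV (\<lambda>y. F (complex_of_real y))"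
  by (rule continuous_on_compose2[of UNIV F UNIV complex_of_real]) (auto intro: continuous_on_of_real continuous_on_id)

lemma F_meas: "continuous_on UNIV F \<Longrightarrow> (\<lambda>y. F (complex_of_real y)) \<in> borel_measurable borel"
  by (intro borel_measurable_continuous_onI F_cont)

lemma Mf_int:
  fixes F :: "complex \<Rightarrow> complex"
  assumes ab: "a < b" and hm: "set_borel_measurable lborel {a..b} h" and cF: "continuous_on UNIV F"
  shows "(\<integral>y. F (complex_of_real y) \<partial>Mf a b h)
     = of_real (1 / (b - a)) * (\<integral>x. indicator {a..b} x *\<^sub>R F (complex_of_real (gg a b h x)) \<partial>lborel)"
proof -
  have "(\<integral>y. F (complex_of_real y) \<partial>Mf a b h) = (\<integral>x. F (complex_of_real (gg a b h x)) \<partial>M0 a b)"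
    unfolding Mf_def by (rule integral_distr) (use gg_meas[OF hm] F_meas[OF cF] in auto)
  also have "\<dots> = (\<integral>x. (indicator {a..b} x / (b - a)) *\<^sub>R F (complex_of_real (gg a b h x)) \<partial>lborel)"
    unfolding M0_def
  proof (rule integral_density)
    show "(\<lambda>x. F (complex_of_real (gg a b h x))) \<in> borel_measurable lborel"
      using measurable_compose[OF gg_meas(2)[OF hm] F_meas[OF cF]] by simp
    show "(\<lambda>x. indicator {a..b} x / (b - a)) \<in> borel_measurable lborel" by simp
    show "AE x in lborel. 0 \<le> indicator {a..b} x / (b - a)" using ab by (intro AE_I2) (simp split: split_indicator)
  qed
  also have "\<dots> = (\<integral>x. of_real (1 / (b - a)) * (indicator {a..b} x *\<^sub>R F (complex_of_real (gg a b h x))) \<partial>lborel)"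
    by (intro Bochner_Integration.integral_cong) (auto simp: scaleR_conv_of_real split: split_indicator)
  also have "\<dots> = of_real (1 / (b - a)) * (\<integral>x. indicator {a..b} x *\<^sub>R F (complex_of_real (gg a b h x)) \<partial>lborel)"
    by (rule integral_mult_right_zero)
  finally show ?thesis .
qed

lemma F_bounded:
  fixes F :: "complex \<Rightarrow> complex"
  assumes "continuous_on UNIV F" "bounded_support F"
  shows "\<exists>B. \<forall>z. norm (F z) \<le> B"
proof -
  obtain R where R: "\<And>z. F z \<noteq> 0 \<Longrightarrow> norm z \<le> R"
    using assms(2) unfolding bounded_support_def bounded_iff by auto
  have "compact (F ` cball 0 R)"
    by (rule compact_continuous_image) (use assms(1) continuous_on_subset in auto)
  then obtain B where B: "\<And>w. w \<in> F ` cball 0 R \<Longrightarrow> norm w \<le> B"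
    using compact_imp_bounded bounded_iff by metis
  show ?thesis
  proof (intro exI allI)
    fix z
    show "norm (F z) \<le> max B 0"
    proof (cases "F z = 0")
      case True then show ?thesis by simp
    next
      case False
      then have "z \<in> cball 0 R" using R by (simp add: dist_norm)
      then have "norm (F z) \<le> B" using B by blast
      then show ?thesis by simp
    qed
  qed
qed

lemma sum_mset_count:
  fixes f :: "'a \<Rightarrow> 'b::real_vector"
  assumes "finite A" "set_mset P \<subseteq> A"
  shows "(\<Sum>x\<in>#P. f x) = (\<Sum>a\<in>A. real (count P a) *\<^sub>R f a)"
  using assms(2)
proof (induction P)
  case empty then show ?case by simp
next
  case (add x P)
  then have xA: "x \<in> A" and PA: "set_mset P \<subseteq> A" by auto
  have "(\<Sum>a\<in>A. real (count (add_mset x P) a) *\<^sub>R f a)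
      = (\<Sum>a\<in>A. real (count P a) *\<^sub>R f a + (if a = x then f a else 0))"
    by (intro sum.cong) (auto simp: scaleR_add_left)
  also have "\<dots> = (\<Sum>a\<in>A. real (count P a) *\<^sub>R f a) + f x"
    using xA assms(1) by (simp add: sum.distrib sum.delta')
  finally show ?case using add.IH[OF PA] by (simp add: add.commute)
qed

definition emp :: "real multiset \<Rightarrow> real measure" where
  "emp P = distr (measure_pmf (pmf_of_multiset P)) borel (\<lambda>x. x)"

lemma emp_rd: "P \<noteq> {#} \<Longrightarrow> real_distribution (emp P)"
proof -
  show ?thesis unfolding emp_def by (intro prob_space.real_distribution_distr[OF prob_space_measure_pmf]) simp
qed

lemma emp_int:
  fixes f :: "real \<Rightarrow> 'b::{banach, second_countable_topology}"
  assumes P: "P \<noteq> {#}" and fm: "f \<in> borel_measurable borel"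
  shows "(\<integral>x. f x \<partial>emp P) = (1 / real (size P)) *\<^sub>R (\<Sum>x\<in>#P. f x)"
proof -
  have "(\<integral>x. f x \<partial>emp P) = (\<integral>x. f x \<partial>measure_pmf (pmf_of_multiset P))"
    unfolding emp_def by (subst integral_distr) (use fm in auto)
  also have "\<dots> = (\<Sum>a\<in>set_mset P. pmf (pmf_of_multiset P) a *\<^sub>R f a)"
    by (rule integral_measure_pmf) (use P in auto)
  also have "\<dots> = (\<Sum>a\<in>set_mset P. (1 / real (size P)) *\<^sub>R (real (count P a) *\<^sub>R f a))"
    using P by (intro sum.cong) auto
  also have "\<dots> = (1 / real (size P)) *\<^sub>R (\<Sum>x\<in>#P. f x)"
    by (simp add: sum_mset_count[of "set_mset P" P f] scaleR_sum_right)
  finally show ?thesis .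
qed

lemma size_filter_sum': "real (size (filter_mset P A)) = (\<Sum>x\<in>#A. if P x then 1 else 0)"
  by (induction A) auto

lemma emp_cdf:
  assumes P: "P \<noteq> {#}"
  shows "cdf (emp P) x = real (size (filter_mset (\<lambda>v. v \<le> x) P)) / real (size P)"
proof -
  interpret real_distribution "emp P" by (rule emp_rd[OF P])
  have "cdf (emp P) x = (\<integral>v. indicator {..x} v \<partial>emp P)" by (simp add: cdf_def)
  also have "\<dots> = (1 / real (size P)) *\<^sub>R (\<Sum>v\<in>#P. indicator {..x} v)"
    by (rule emp_int[OF P]) simp
  also have "(\<Sum>v\<in>#P. indicator {..x} v) = (\<Sum>v\<in>#P. if v \<le> x then 1 else (0::real))"
    by (intro arg_cong[where f=sum_mset] image_mset_cong) (auto split: split_indicator)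
  finally show ?thesis by (simp add: size_filter_sum')
qed

lemma rhs_conv:
  fixes F :: "complex \<Rightarrow> complex" and fs :: "nat \<Rightarrow> real \<Rightarrow> real"
  assumes ab: "a < b" and hm: "\<And>j. j < k \<Longrightarrow> set_borel_measurable lborel {a..b} (fs j)"
    and cF: "continuous_on UNIV F" and FB: "\<And>z. norm (F z) \<le> B"
  shows "of_real (1 / (b - a)) * (LINT x:{a..b}|lborel. (1 / of_nat k) * (\<Sum>j<k. F (complex_of_real (fs j x))))
       = (\<Sum>j<k. (\<integral>y. F (complex_of_real y) \<partial>Mf a b (fs j))) / of_nat k"
proof -
  let ?h = "\<lambda>j x. indicator {a..b} x *\<^sub>R F (complex_of_real (gg a b (fs j) x))"
  have int: "integrable lborel (?h j)" if j: "j < k" for j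
  proof (rule integrableI_bounded_set[where A="{a..b}" and B=B])
    show "{a..b} \<in> sets lborel" by simp
    show "?h j \<in> borel_measurable lborel"
      using measurable_compose[OF gg_meas(2)[OF hm[OF j]] F_meas[OF cF]] by simp
    show "emeasure lborel {a..b} < \<infinity>" using ab by simp
    show "AE x in lborel. x \<in> {a..b} \<longrightarrow> norm (?h j x) \<le> B" using FB by simp
    show "AE x in lborel. x \<notin> {a..b} \<longrightarrow> ?h j x = 0" by simp
  qed
  have pw: "indicator {a..b} x *\<^sub>R ((1 / of_nat k) * (\<Sum>j<k. F (complex_of_real (fs j x))))
      = (1 / of_nat k) * (\<Sum>j<k. ?h j x)" for x
    by (cases "x \<in> {a..b}") (simp_all add: gg_def)
  have "(LINT x:{a..b}|lborel. (1 / of_nat k) * (\<Sum>j<k. F (complex_of_real (fs j x))))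
      = (\<integral>x. (1 / of_nat k) * (\<Sum>j<k. ?h j x) \<partial>lborel)"
    unfolding set_lebesgue_integral_def pw ..
  also have "\<dots> = (1 / of_nat k) * (\<Sum>j<k. (\<integral>x. ?h j x \<partial>lborel))"
  proof -
    have S: "(\<integral>x. (\<Sum>j<k. ?h j x) \<partial>lborel) = (\<Sum>j<k. (\<integral>x. ?h j x \<partial>lborel))"
      by (rule Bochner_Integration.integral_sum) (use int in auto)
    have "(\<integral>x. (1 / of_nat k) * (\<Sum>j<k. ?h j x) \<partial>lborel) = (1 / of_nat k) * (\<integral>x. (\<Sum>j<k. ?h j x) \<partial>lborel)"
      by (rule integral_mult_right_zero)
    then show ?thesis unfolding S .
  qed
  finally have L: "(LINT x:{a..b}|lborel. (1 / of_nat k) * (\<Sum>j<k. F (complex_of_real (fs j x))))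
      = (1 / of_nat k) * (\<Sum>j<k. (\<integral>x. ?h j x \<partial>lborel))" .
  have R: "(\<Sum>j<k. (\<integral>y. F (complex_of_real y) \<partial>Mf a b (fs j)))
      = of_real (1 / (b - a)) * (\<Sum>j<k. (\<integral>x. ?h j x \<partial>lborel))"
    by (simp add: Mf_int[OF ab hm cF] sum_distrib_left)
  show ?thesis unfolding L R by (simp add: field_simps)
qed

lemma sum_mset_of_real: "(\<Sum>x\<in>#A. complex_of_real (f x)) = complex_of_real (\<Sum>x\<in>#A. f x)"
  by (induction A) auto

lemma H_from:
  fixes \<phi> :: "real \<Rightarrow> real"
  assumes ab: "a < b" and hm: "\<And>j. j < k \<Longrightarrow> set_borel_measurable lborel {a..b} (f j)"
    and asym: "asym_distr Lam a b f k" and c\<phi>: "continuous_on UNIV \<phi>"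
    and supp: "\<exists>R. \<forall>x. R < \<bar>x\<bar> \<longrightarrow> \<phi> x = 0"
  shows "(\<lambda>n. (\<Sum>x\<in>#Lam n. \<phi> x) / real (size (Lam n))) \<longlonglongrightarrow> (\<Sum>j<k. (\<integral>x. \<phi> x \<partial>Mf a b (f j))) / real k"
proof -
  obtain R where R: "\<And>x. R < \<bar>x\<bar> \<Longrightarrow> \<phi> x = 0" using supp by blast
  define F where "F z = complex_of_real (\<phi> (Re z) * max 0 (1 - \<bar>Im z\<bar>))" for z
  have c1: "continuous_on UNIV (\<lambda>z. \<phi> (Re z))"
    by (rule continuous_on_compose2[OF c\<phi>]) (auto intro: continuous_on_Re continuous_on_id)
  have cF: "continuous_on UNIV F" unfolding F_def
    by (intro continuous_on_of_real continuous_on_mult c1 continuous_on_max continuous_on_const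
        continuous_on_diff continuous_on_rabs continuous_on_Im continuous_on_id)
  have bs: "bounded_support F" unfolding bounded_support_def
  proof (rule bounded_subset[OF bounded_cball[of 0 "\<bar>R\<bar> + 1"]])
    show "{z. F z \<noteq> 0} \<subseteq> cball 0 (\<bar>R\<bar> + 1)"
    proof
      fix z assume "z \<in> {z. F z \<noteq> 0}"
      then have "\<phi> (Re z) \<noteq> 0" "max 0 (1 - \<bar>Im z\<bar>) \<noteq> 0" by (auto simp: F_def)
      then have "\<bar>Re z\<bar> \<le> R" "\<bar>Im z\<bar> \<le> 1" using R by (force, linarith)
      moreover have "norm z \<le> \<bar>Re z\<bar> + \<bar>Im z\<bar>" by (rule cmod_le)
      ultimately show "z \<in> cball 0 (\<bar>R\<bar> + 1)" by (simp add: dist_norm)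
    qed
  qed
  obtain B where FB: "\<And>z. norm (F z) \<le> B" using F_bounded[OF cF bs] by blast
  have Fr: "F (complex_of_real x) = complex_of_real (\<phi> x)" for x by (simp add: F_def)
  have lim: "(\<lambda>n. (\<Sum>x\<in>#Lam n. F (complex_of_real x)) / of_nat (size (Lam n))) \<longlonglongrightarrow>
      of_real (1 / (b - a)) * (LINT x:{a..b}|lborel. (1 / of_nat k) * (\<Sum>j<k. F (complex_of_real (f j x))))"
    using asym cF bs unfolding asym_distr_def by blast
  also have "of_real (1 / (b - a)) * (LINT x:{a..b}|lborel. (1 / of_nat k) * (\<Sum>j<k. F (complex_of_real (f j x))))
      = (\<Sum>j<k. (\<integral>y. F (complex_of_real y) \<partial>Mf a b (f j))) / of_nat k"
    by (rule rhs_conv[OF ab hm cF FB])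
  also have "\<dots> = complex_of_real ((\<Sum>j<k. (\<integral>x. \<phi> x \<partial>Mf a b (f j))) / real k)"
    by (simp add: Fr)
  finally have "(\<lambda>n. complex_of_real ((\<Sum>x\<in>#Lam n. \<phi> x) / real (size (Lam n)))) \<longlonglongrightarrow>
      complex_of_real ((\<Sum>j<k. (\<integral>x. \<phi> x \<partial>Mf a b (f j))) / real k)"
    by (simp add: Fr sum_mset_of_real)
  then show ?thesis by (simp only: tendsto_of_real_iff)
qed

lemma concl:
  assumes ab: "a < b" and hm: "set_borel_measurable lborel {a..b} h"
    and sz: "filterlim (\<lambda>n. size (Ps n)) at_top sequentially"
    and cdfc: "\<And>x. isCont (cdf (Mf a b h)) x \<Longrightarrow>
       (\<lambda>n. real (size (filter_mset (\<lambda>v. v \<le> x) (Ps n))) / real (size (Ps n))) \<longlonglongrightarrow> cdf (Mf a b h) x"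
  shows "asym_distr Ps a b (\<lambda>_. h) 1"
  unfolding asym_distr_def
proof (intro conjI allI impI)
  show "filterlim (\<lambda>n. size (Ps n)) at_top sequentially" by (rule sz)
  fix F :: "complex \<Rightarrow> complex" assume FF: "continuous_on UNIV F \<and> bounded_support F"
  then have cF: "continuous_on UNIV F" and bs: "bounded_support F" by auto
  obtain B where FB: "\<And>z. norm (F z) \<le> B" using F_bounded[OF cF bs] by blast
  have ne: "eventually (\<lambda>n. Ps n \<noteq> {#}) sequentially"
  proof -
    have "\<forall>Z. eventually (\<lambda>n. Z \<le> size (Ps n)) sequentially" using sz by (simp add: filterlim_at_top)
    then have "eventually (\<lambda>n. 1 \<le> size (Ps n)) sequentially" by blast
    then show ?thesis by (rule eventually_mono) auto
  qed
  define \<mu> where "\<mu> n = (if Ps n = {#} then Mf a b h else emp (Ps n))" for n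
  have RDM: "real_distribution (Mf a b h)" by (rule Mf_rd[OF ab hm])
  have RD\<mu>: "real_distribution (\<mu> n)" for n using RDM emp_rd by (simp add: \<mu>_def)
  have wc: "weak_conv_m \<mu> (Mf a b h)"
    unfolding weak_conv_m_def weak_conv_def
  proof (intro allI impI)
    fix x assume "isCont (cdf (Mf a b h)) x"
    from cdfc[OF this] show "(\<lambda>n. cdf (\<mu> n) x) \<longlonglongrightarrow> cdf (Mf a b h) x"
    proof (rule Lim_transform_eventually)
      show "eventually (\<lambda>n. real (size (filter_mset (\<lambda>v. v \<le> x) (Ps n))) / real (size (Ps n)) = cdf (\<mu> n) x) sequentially"
        using ne by eventually_elim (simp add: \<mu>_def emp_cdf)
    qed
  qed
  have cont: "isCont (\<lambda>y. F (complex_of_real y)) x" for x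
    using F_cont[OF cF] by (simp add: continuous_on_eq_continuous_at)
  have "(\<lambda>n. (\<integral>y. F (complex_of_real y) \<partial>\<mu> n)) \<longlonglongrightarrow> (\<integral>y. F (complex_of_real y) \<partial>Mf a b h)"
    by (rule weak_conv_imp_integral_bdd_continuous_conv[OF RD\<mu> RDM wc cont FB])
  then have "(\<lambda>n. (\<Sum>x\<in>#Ps n. F (complex_of_real x)) / of_nat (size (Ps n))) \<longlonglongrightarrow> (\<integral>y. F (complex_of_real y) \<partial>Mf a b h)"
  proof (rule Lim_transform_eventually)
    show "eventually (\<lambda>n. (\<integral>y. F (complex_of_real y) \<partial>\<mu> n) = (\<Sum>x\<in>#Ps n. F (complex_of_real x)) / of_nat (size (Ps n))) sequentially"
      using ne
    proof eventually_elim
      case (elim n)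
      then have "(\<integral>y. F (complex_of_real y) \<partial>\<mu> n) = (1 / real (size (Ps n))) *\<^sub>R (\<Sum>x\<in>#Ps n. F (complex_of_real x))"
        unfolding \<mu>_def using emp_int[OF elim F_meas[OF cF]] by simp
      then show ?case by (simp add: scaleR_conv_of_real divide_inverse mult.commute)
    qed
  qed
  also have "(\<integral>y. F (complex_of_real y) \<partial>Mf a b h)
     = of_real (1 / (b - a)) * (LINT x:{a..b}|lborel. (1 / of_nat 1) * (\<Sum>j<(1::nat). F (complex_of_real ((\<lambda>_. h) j x))))"
    using rhs_conv[OF ab _ cF FB, where k=1 and fs="\<lambda>_. h"] hm by simp
  finally show "(\<lambda>n. (\<Sum>x\<in>#Ps n. F (complex_of_real x)) / of_nat (size (Ps n))) \<longlonglongrightarrow>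
     of_real (1 / (b - a)) * (LINT x:{a..b}|lborel. (1 / of_nat 1) * (\<Sum>j<(1::nat). F (complex_of_real ((\<lambda>_. h) j x))))" .
qed


theorem lemma2p8:
  fixes a b :: real and k :: nat
    and f :: "nat \<Rightarrow> real \<Rightarrow> real"
    and Lam :: "nat \<Rightarrow> real multiset"
    and L :: "nat \<Rightarrow> nat \<Rightarrow> nat"
  assumes "a < b"
    and "\<And>j. j < k \<Longrightarrow> set_borel_measurable lborel {a..b} (f j)"
    and "asym_distr Lam a b f k"
    and "\<And>n. (\<Sum>j<k. L n j) = size (Lam n)"
    and "\<And>j. j < k \<Longrightarrow> (\<lambda>n. real (L n j) / real (size (Lam n))) \<longlonglongrightarrow> 1 / real k"
  shows "\<exists>P :: nat \<Rightarrow> nat \<Rightarrow> real multiset.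
           (\<forall>n. (\<Sum>j<k. P n j) = Lam n \<and> (\<forall>j<k. size (P n j) = L n j)) \<and>
           (\<forall>j<k. asym_distr (\<lambda>n. P n j) a b (\<lambda>_. f j) 1)"
proof -
  note ab = assms(1) and hm = assms(2) and asym = assms(3) and Ls = assms(4) and Lc = assms(5)
  have dinf: "filterlim (\<lambda>n. size (Lam n)) at_top sequentially"
    using asym unfolding asym_distr_def by blast
  have kpos: "0 < k"
  proof (rule ccontr)
    assume "\<not> 0 < k"
    then have "\<And>n. size (Lam n) = 0" using Ls by (metis lessThan_0 neq0_conv sum.empty)
    moreover have "\<forall>Z. eventually (\<lambda>n. Z \<le> size (Lam n)) sequentially" using dinf by (simp add: filterlim_at_top)
    then have "eventually (\<lambda>n. 1 \<le> size (Lam n)) sequentially" by blast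
    ultimately show False by simp
  qed
  have MP: "mixpart k (\<lambda>j. Mf a b (f j)) Lam L"
    unfolding mixpart_def mixpart_axioms_def mixseq_def mixseq_axioms_def mix_def
    using kpos Mf_rd[OF ab hm] dinf H_from[OF ab hm asym] Ls Lc by auto
  obtain P :: "nat \<Rightarrow> nat \<Rightarrow> real multiset" where
    P1: "\<forall>n. (\<Sum>j<k. P n j) = Lam n \<and> (\<forall>j<k. size (P n j) = L n j)" and
    P2: "\<forall>j<k. filterlim (\<lambda>n. size (P n j)) at_top sequentially \<and>
        (\<forall>x. isCont (cdf (Mf a b (f j))) x \<longrightarrow>
           (\<lambda>n. real (size (filter_mset (\<lambda>v. v \<le> x) (P n j))) / real (size (P n j))) \<longlonglongrightarrow> cdf (Mf a b (f j)) x)"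
    using mixpart.main_abstract[OF MP] by blast
  show ?thesis
  proof (rule exI[of _ P], rule conjI)
    show "\<forall>n. (\<Sum>j<k. P n j) = Lam n \<and> (\<forall>j<k. size (P n j) = L n j)" using P1 by blast
    show "\<forall>j<k. asym_distr (\<lambda>n. P n j) a b (\<lambda>_. f j) 1"
    proof (intro allI impI)
      fix j assume "j < k"
      then show "asym_distr (\<lambda>n. P n j) a b (\<lambda>_. f j) 1"
        using P2 by (intro concl[OF ab hm[OF \<open>j < k\<close>]]) auto
    qed
  qed
qed

end
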